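(* Let $\Omega\subset\mathbb{R}^n$ be a domain and $\mathcal{S}$ a basis of shapes in $\Omega$. If there exists $p_0\in[1,\infty)$ such that every $f\in\mathrm{BMO}^{p_0}_{\mathcal{S}}(\Omega)$ has the John–Nirenberg property with respect to $\mathcal{S}$, then $\mathrm{BMO}^{p_1}_{\mathcal{S}}(\Omega)\cong\mathrm{BMO}^{p_2}_{\mathcal{S}}(\Omega)$ for all $p_0\le p_1,p_2<\infty$.
   Context: A domain is an open connected set. A shape is an open set with $0<|S|<\infty$; a basis of shapes in $\Omega$ is a collection of shapes contained in $\Omega$ covering $\Omega$. For $f\in L^1(S)$, $f_S=\frac1{|S|}\int_Sf$. $\mathrm{BMO}^p_{\mathcal{S}}(\Omega)$ is the space of $f$ with $f\in L^1(S)$ for all $S\in\mathcal{S}$ and $\|f\|_{\mathrm{BMO}^p_{\mathcal{S}}}:=\sup_{S\in\mathcal{S}}\big(\frac1{|S|}\int_S|f-f_S|^p\big)^{1/p}<\infty$. A function $f\in L^1_{loc}(\Omega)$ has the John–Nirenberg property with respect to $\mathcal{S}$ if there exist $c_1,c_2>0$ such that for all $S\in\mathcal{S}$ and all $\alpha>0$, $|\{x\in S:|f(x)-f_S|>\alpha\}|\le c_1|S|e^{-c_2\alpha}$. The notation $X\cong Y$ means the two spaces coincide as sets with equivalent (semi)norms. *)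

theory Defs
  imports "HOL-Analysis.Analysis"
begin

definition domain :: "'a::euclidean_space set \<Rightarrow> bool" where
  "domain \<Omega> \<longleftrightarrow> open \<Omega> \<and> connected \<Omega>"

definition shape :: "'a::euclidean_space set \<Rightarrow> bool" where
  "shape S \<longleftrightarrow> open S \<and> 0 < emeasure lebesgue S \<and> emeasure lebesgue S < \<infinity>"

definition basis_of_shapes :: "'a::euclidean_space set set \<Rightarrow> 'a set \<Rightarrow> bool" where
  "basis_of_shapes \<S> \<Omega> \<longleftrightarrow> (\<forall>S\<in>\<S>. shape S \<and> S \<subseteq> \<Omega>) \<and> \<Union>\<S> = \<Omega>"

definition avg :: "('a::euclidean_space \<Rightarrow> real) \<Rightarrow> 'a set \<Rightarrow> real" where
  "avg f S = (LINT x:S|lebesgue. f x) / measure lebesgue S"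

text \<open>The p-oscillation ((1/|S|) \<integral>_S |f - f_S|^p)^(1/p) (meaningful when the integral is finite).\<close>
definition bmo_osc :: "real \<Rightarrow> ('a::euclidean_space \<Rightarrow> real) \<Rightarrow> 'a set \<Rightarrow> real" where
  "bmo_osc p f S =
     (enn2real (\<integral>\<^sup>+ x\<in>S. ennreal (\<bar>f x - avg f S\<bar> powr p) \<partial>lebesgue) / measure lebesgue S) powr (1 / p)"

definition in_BMO :: "real \<Rightarrow> 'a::euclidean_space set set \<Rightarrow> ('a \<Rightarrow> real) \<Rightarrow> bool" where
  "in_BMO p \<S> f \<longleftrightarrow>
     (\<forall>S\<in>\<S>. set_integrable lebesgue S f) \<and>
     (\<forall>S\<in>\<S>. (\<integral>\<^sup>+ x\<in>S. ennreal (\<bar>f x - avg f S\<bar> powr p) \<partial>lebesgue) < \<infinity>) \<and>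
     bdd_above ((\<lambda>S. bmo_osc p f S) ` \<S>)"

definition bmo_norm :: "real \<Rightarrow> 'a::euclidean_space set set \<Rightarrow> ('a \<Rightarrow> real) \<Rightarrow> real" where
  "bmo_norm p \<S> f = (SUP S\<in>\<S>. bmo_osc p f S)"

definition locally_integrable_on :: "('a::euclidean_space \<Rightarrow> real) \<Rightarrow> 'a set \<Rightarrow> bool" where
  "locally_integrable_on f \<Omega> \<longleftrightarrow>
     (\<forall>K. compact K \<and> K \<subseteq> \<Omega> \<longrightarrow> set_integrable lebesgue K f)"

definition john_nirenberg :: "'a::euclidean_space set \<Rightarrow> 'a set set \<Rightarrow> ('a \<Rightarrow> real) \<Rightarrow> bool" where
  "john_nirenberg \<Omega> \<S> f \<longleftrightarrow> locally_integrable_on f \<Omega> \<and>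
     (\<exists>c1>0. \<exists>c2>0. \<forall>S\<in>\<S>. \<forall>\<alpha>>0.
        measure lebesgue {x\<in>S. \<bar>f x - avg f S\<bar> > \<alpha>}
          \<le> c1 * measure lebesgue S * exp (- c2 * \<alpha>))"

end

theory Submission
  imports Defs "HOL-Real_Asymp.Real_Asymp"
begin


definition mavg :: "'b measure \<Rightarrow> ('b \<Rightarrow> real) \<Rightarrow> real" where
  "mavg M f = integral\<^sup>L M f / measure M (space M)"

definition mI :: "'b measure \<Rightarrow> real \<Rightarrow> ('b \<Rightarrow> real) \<Rightarrow> ennreal" where
  "mI M p f = (\<integral>\<^sup>+x. ennreal (\<bar>f x - mavg M f\<bar> powr p) \<partial>M)"

definition mosc :: "'b measure \<Rightarrow> real \<Rightarrow> ('b \<Rightarrow> real) \<Rightarrow> real" where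
  "mosc M p f = (enn2real (mI M p f) / measure M (space M)) powr (1/p)"

lemma crude_pt:
  fixes p q t u :: real
  assumes "0 < p" "p \<le> q" "0 < t" "0 \<le> u"
  shows "u powr p \<le> t powr p + t powr (p - q) * u powr q"
proof (cases "u \<le> t")
  case True
  then have "u powr p \<le> t powr p" using assms by (intro powr_mono2) auto
  then show ?thesis by (simp add: add_increasing2)
next
  case False
  then have u: "t < u" by simp
  have "u powr p = u powr (p - q) * u powr q"
    using u assms by (simp add: powr_add[symmetric])
  also have "\<dots> \<le> t powr (p - q) * u powr q"
    using u assms by (intro mult_right_mono powr_mono2') auto
  finally show ?thesis by (simp add: add_increasing)
qed

lemma quasi_pt:
  fixes p x y :: real
  assumes "0 < p"
  shows "\<bar>x + y\<bar> powr p \<le> 2 powr p * (\<bar>x\<bar> powr p + \<bar>y\<bar> powr p)"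
proof -
  have "\<bar>x + y\<bar> \<le> 2 * max \<bar>x\<bar> \<bar>y\<bar>" by linarith
  then have "\<bar>x + y\<bar> powr p \<le> (2 * max \<bar>x\<bar> \<bar>y\<bar>) powr p"
    using assms by (intro powr_mono2) auto
  also have "\<dots> = 2 powr p * max \<bar>x\<bar> \<bar>y\<bar> powr p" by (simp add: powr_mult)
  also have "max \<bar>x\<bar> \<bar>y\<bar> powr p \<le> \<bar>x\<bar> powr p + \<bar>y\<bar> powr p"
    by (cases "\<bar>x\<bar> \<le> \<bar>y\<bar>") (auto simp: max_def)
  finally show ?thesis by (simp add: mult_left_mono)
qed

locale fpm = finite_measure M for M :: "'b measure" +
  assumes pos: "0 < measure M (space M)"
begin

abbreviation "m \<equiv> measure M (space M)"

lemma mavg_add: "integrable M f \<Longrightarrow> integrable M g \<Longrightarrow>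
  mavg M (\<lambda>x. f x + g x) = mavg M f + mavg M g"
  by (simp add: mavg_def add_divide_distrib)

lemma mavg_diff: "integrable M f \<Longrightarrow> integrable M g \<Longrightarrow>
  mavg M (\<lambda>x. f x - g x) = mavg M f - mavg M g"
  by (simp add: mavg_def diff_divide_distrib)

lemma mavg_cmult: "mavg M (\<lambda>x. c * f x) = c * mavg M f"
  by (simp add: mavg_def)

lemma mavg_const: "mavg M (\<lambda>x. c) = c"
  using pos by (simp add: mavg_def)

lemma mavg_add_const: "integrable M f \<Longrightarrow> mavg M (\<lambda>x. f x + c) = mavg M f + c"
  using mavg_add[of f "\<lambda>x. c"] mavg_const by simp

lemma mI_add_const: "integrable M f \<Longrightarrow> mI M p (\<lambda>x. f x + c) = mI M p f"
  by (simp add: mI_def mavg_add_const)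

lemma mosc_add_const: "integrable M f \<Longrightarrow> mosc M p (\<lambda>x. f x + c) = mosc M p f"
  by (simp add: mosc_def mI_add_const)

lemma mI_crude:
  assumes f: "f \<in> borel_measurable M" and "0 < p" "p \<le> q" "0 < t"
  shows "mI M p f \<le> ennreal (t powr p * m) + ennreal (t powr (p - q)) * mI M q f"
proof -
  have "mI M p f \<le> (\<integral>\<^sup>+x. ennreal (t powr p) + ennreal (t powr (p - q)) * ennreal (\<bar>f x - mavg M f\<bar> powr q) \<partial>M)"
    unfolding mI_def
    by (intro nn_integral_mono) (use assms crude_pt in \<open>auto simp: ennreal_mult[symmetric] ennreal_plus[symmetric] simp del: ennreal_plus\<close>)
  also have "\<dots> = (\<integral>\<^sup>+x. ennreal (t powr p) \<partial>M) + ennreal (t powr (p - q)) * mI M q f"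
    unfolding mI_def using f
    by (subst nn_integral_add) (auto intro!: nn_integral_cmult)
  also have "(\<integral>\<^sup>+x. ennreal (t powr p) \<partial>M) = ennreal (t powr p * m)"
    by (simp add: emeasure_eq_measure ennreal_mult)
  finally show ?thesis .
qed

end
lemma powr_le_helper:
  fixes X y K p :: real
  assumes "0 \<le> X" "0 \<le> y" "0 < p" "0 \<le> K" "X \<le> K * y powr p"
  shows "X powr (1/p) \<le> K powr (1/p) * y"
proof -
  have "X powr (1/p) \<le> (K * y powr p) powr (1/p)"
    using assms by (intro powr_mono2) auto
  also have "\<dots> = K powr (1/p) * (y powr p) powr (1/p)"
    using assms by (simp add: powr_mult)
  also have "(y powr p) powr (1/p) = y"
    using assms by (simp add: powr_powr)
  finally show ?thesis .
qed

lemma two_powr_le: "1 \<le> p \<Longrightarrow> (2::real) powr (1/p) \<le> 2"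
  using powr_mono[of "1/p" 1 2] by simp

context fpm begin

lemma mosc_nonneg: "0 \<le> mosc M p f"
  by (simp add: mosc_def)

lemma mosc_mono:
  assumes f: "integrable M f" and p: "1 \<le> p" "p \<le> q" and fin: "mI M q f < \<infinity>"
  shows "mI M p f < \<infinity>" "mosc M p f \<le> 2 * mosc M q f"
proof -
  have fm: "f \<in> borel_measurable M" using f by auto
  have c1: "mI M p f \<le> ennreal (1 powr p * m) + ennreal (1 powr (p - q)) * mI M q f"
    using mI_crude[OF fm _ p(2), of 1] p by simp
  then show finp: "mI M p f < \<infinity>" using fin
    by (simp add: ennreal_mult_less_top order_le_less_trans)
  define A where "A = enn2real (mI M p f)"
  define B where "B = enn2real (mI M q f)"
  have A: "mI M p f = ennreal A" "0 \<le> A" using finp by (auto simp: A_def)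
  have B: "mI M q f = ennreal B" "0 \<le> B" using fin by (auto simp: B_def)
  define a where "a = (B / m) powr (1/q)"
  have mpos: "0 < m" using pos .
  have aq: "a powr q = B / m" using p B mpos by (simp add: a_def powr_powr)
  have a0: "0 \<le> a" by (simp add: a_def)
  show "mosc M p f \<le> 2 * mosc M q f"
  proof (cases "a = 0")
    case False
    then have apos: "0 < a" using a0 by simp
    have "ennreal A \<le> ennreal (a powr p * m) + ennreal (a powr (p - q)) * ennreal B"
      using mI_crude[OF fm _ p(2) apos] p A B by simp
    also have "\<dots> = ennreal (a powr p * m + a powr (p - q) * B)"
      using B apos mpos by (simp add: ennreal_mult ennreal_plus)
    finally have "A \<le> a powr p * m + a powr (p - q) * B"
      using apos mpos B by (subst (asm) ennreal_le_iff) (auto intro!: add_nonneg_nonneg)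
    moreover have "a powr (p - q) * B = a powr p * m"
    proof -
      have "B = a powr q * m" using aq mpos by simp
      then have "a powr (p - q) * B = (a powr (p - q) * a powr q) * m" by simp
      also have "a powr (p - q) * a powr q = a powr p" using apos by (simp add: powr_add[symmetric])
      finally show ?thesis .
    qed
    ultimately have "A \<le> 2 * a powr p * m" by simp
    then have "A / m \<le> 2 * a powr p" using mpos by (simp add: divide_le_eq)
    then have "(A / m) powr (1/p) \<le> 2 powr (1/p) * a"
      using A mpos a0 p by (intro powr_le_helper) auto
    also have "\<dots> \<le> 2 * a" using two_powr_le[OF p(1)] a0 by (simp add: mult_right_mono)
    finally show ?thesis by (simp add: mosc_def A_def[symmetric] B_def[symmetric] a_def)
  next
    case True
    then have B0: "B = 0" using mpos B by (simp add: a_def)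
    have "A = 0"
    proof (rule ccontr)
      assume "A \<noteq> 0"
      then have Apos: "0 < A" using A by simp
      define t where "t = (A / (2 * m)) powr (1/p)"
      have tpos: "0 < t" using Apos mpos by (simp add: t_def)
      have tp: "t powr p = A / (2 * m)" using Apos mpos p by (simp add: t_def powr_powr)
      have "ennreal A \<le> ennreal (t powr p * m) + ennreal (t powr (p - q)) * ennreal B"
        using mI_crude[OF fm _ p(2) tpos] p A B by simp
      then have "A \<le> t powr p * m" using B0 mpos by (simp add: ennreal_le_iff)
      also have "\<dots> = A / 2" using tp mpos by simp
      finally show False using Apos by simp
    qed
    then show ?thesis using p by (simp add: mosc_def A_def[symmetric] B_def[symmetric] mosc_nonneg)
  qed
qed

lemma mI_one: "mI M 1 f = (\<integral>\<^sup>+x. ennreal \<bar>f x - mavg M f\<bar> \<partial>M)"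
  by (simp add: mI_def)

lemma L1_bound:
  assumes f: "integrable M f" and p: "1 \<le> p" and fin: "mI M p f < \<infinity>"
  shows "(\<integral>\<^sup>+x. ennreal \<bar>f x - mavg M f\<bar> \<partial>M) \<le> ennreal (2 * m * mosc M p f)"
proof -
  have f1: "mI M 1 f < \<infinity>" and o1: "mosc M 1 f \<le> 2 * mosc M p f"
    using mosc_mono[OF f _ p fin] by auto
  have "mosc M 1 f = enn2real (mI M 1 f) / m" by (simp add: mosc_def)
  then have e: "enn2real (mI M 1 f) = m * mosc M 1 f" using pos by simp
  have "m * mosc M 1 f \<le> m * (2 * mosc M p f)" using o1 pos by (intro mult_left_mono) auto
  then have "enn2real (mI M 1 f) \<le> 2 * m * mosc M p f" using e by simp
  then have "ennreal (enn2real (mI M 1 f)) \<le> ennreal (2 * m * mosc M p f)"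
    by (rule ennreal_leI)
  moreover have "ennreal (enn2real (mI M 1 f)) = mI M 1 f" using f1 by simp
  ultimately have "mI M 1 f \<le> ennreal (2 * m * mosc M p f)" by simp
  then show ?thesis by (simp add: mI_one)
qed

lemma mI_cmult:
  assumes f: "f \<in> borel_measurable M" and p: "0 < p"
  shows "mI M p (\<lambda>x. c * f x) = ennreal (\<bar>c\<bar> powr p) * mI M p f"
proof -
  have "mI M p (\<lambda>x. c * f x) = (\<integral>\<^sup>+x. ennreal (\<bar>c\<bar> powr p) * ennreal (\<bar>f x - mavg M f\<bar> powr p) \<partial>M)"
    unfolding mI_def mavg_cmult
  proof (intro nn_integral_cong)
    fix x
    have "\<bar>c * f x - c * mavg M f\<bar> = \<bar>c\<bar> * \<bar>f x - mavg M f\<bar>"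
      by (simp add: abs_mult[symmetric] right_diff_distrib)
    then have "\<bar>c * f x - c * mavg M f\<bar> powr p = \<bar>c\<bar> powr p * \<bar>f x - mavg M f\<bar> powr p"
      by (simp add: powr_mult)
    then show "ennreal (\<bar>c * f x - c * mavg M f\<bar> powr p) = ennreal (\<bar>c\<bar> powr p) * ennreal (\<bar>f x - mavg M f\<bar> powr p)"
      by (simp add: ennreal_mult)
  qed
  also have "\<dots> = ennreal (\<bar>c\<bar> powr p) * mI M p f"
    unfolding mI_def using f by (intro nn_integral_cmult) auto
  finally show ?thesis .
qed

lemma mosc_cmult:
  assumes f: "f \<in> borel_measurable M" and p: "0 < p"
  shows "mosc M p (\<lambda>x. c * f x) = \<bar>c\<bar> * mosc M p f"
proof -
  define X where "X = enn2real (mI M p f)"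
  have X0: "0 \<le> X" by (simp add: X_def)
  have e1: "enn2real (mI M p (\<lambda>x. c * f x)) = \<bar>c\<bar> powr p * X"
    unfolding X_def mI_cmult[OF f p] by (simp add: enn2real_mult)
  have "mosc M p (\<lambda>x. c * f x) = (\<bar>c\<bar> powr p * X / m) powr (1/p)"
    unfolding mosc_def e1 by (rule refl)
  also have "\<dots> = (\<bar>c\<bar> powr p) powr (1/p) * (X / m) powr (1/p)"
    using powr_mult[of "\<bar>c\<bar> powr p" "X / m" "1/p"] X0 pos by simp
  also have "\<dots> = \<bar>c\<bar> * mosc M p f" using p by (simp add: powr_powr mosc_def X_def)
  finally show ?thesis .
qed

lemma mI_cmult_fin:
  assumes f: "f \<in> borel_measurable M" and p: "0 < p" and fin: "mI M p f < \<infinity>"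
  shows "mI M p (\<lambda>x. c * f x) < \<infinity>"
  unfolding mI_cmult[OF f p] using fin by (simp add: ennreal_mult_less_top)

lemma mI_add:
  assumes f: "integrable M f" and g: "integrable M g" and p: "0 < p"
  shows "mI M p (\<lambda>x. f x + g x) \<le> ennreal (2 powr p) * (mI M p f + mI M p g)"
proof -
  have pt: "ennreal (\<bar>f x + g x - mavg M (\<lambda>x. f x + g x)\<bar> powr p) \<le>
     ennreal (2 powr p) * (ennreal (\<bar>f x - mavg M f\<bar> powr p) + ennreal (\<bar>g x - mavg M g\<bar> powr p))" for x
  proof -
    have e: "f x + g x - mavg M (\<lambda>x. f x + g x) = (f x - mavg M f) + (g x - mavg M g)"
      using mavg_add[OF f g] by simp
    have "\<bar>f x + g x - mavg M (\<lambda>x. f x + g x)\<bar> powr p \<le> 2 powr p * (\<bar>f x - mavg M f\<bar> powr p + \<bar>g x - mavg M g\<bar> powr p)"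
      unfolding e by (rule quasi_pt[OF p])
    then have "ennreal (\<bar>f x + g x - mavg M (\<lambda>x. f x + g x)\<bar> powr p) \<le> ennreal (2 powr p * (\<bar>f x - mavg M f\<bar> powr p + \<bar>g x - mavg M g\<bar> powr p))"
      by (rule ennreal_leI)
    also have "\<dots> = ennreal (2 powr p) * (ennreal (\<bar>f x - mavg M f\<bar> powr p) + ennreal (\<bar>g x - mavg M g\<bar> powr p))"
      by (simp add: ennreal_mult ennreal_plus)
    finally show ?thesis .
  qed
  have "mI M p (\<lambda>x. f x + g x) \<le> (\<integral>\<^sup>+x. ennreal (2 powr p) * (ennreal (\<bar>f x - mavg M f\<bar> powr p) + ennreal (\<bar>g x - mavg M g\<bar> powr p)) \<partial>M)"
    unfolding mI_def by (intro nn_integral_mono pt)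
  also have "\<dots> = ennreal (2 powr p) * (\<integral>\<^sup>+x. (ennreal (\<bar>f x - mavg M f\<bar> powr p) + ennreal (\<bar>g x - mavg M g\<bar> powr p)) \<partial>M)"
    using f g by (intro nn_integral_cmult) auto
  also have "(\<integral>\<^sup>+x. (ennreal (\<bar>f x - mavg M f\<bar> powr p) + ennreal (\<bar>g x - mavg M g\<bar> powr p)) \<partial>M) = mI M p f + mI M p g"
    unfolding mI_def using f g by (intro nn_integral_add) auto
  finally show ?thesis .
qed

lemma mosc_add:
  assumes f: "integrable M f" and g: "integrable M g" and p: "1 \<le> p"
    and ff: "mI M p f < \<infinity>" and gf: "mI M p g < \<infinity>"
  shows "mI M p (\<lambda>x. f x + g x) < \<infinity>"
    "mosc M p (\<lambda>x. f x + g x) \<le> 4 * (mosc M p f + mosc M p g)"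
proof -
  have le: "mI M p (\<lambda>x. f x + g x) \<le> ennreal (2 powr p) * (mI M p f + mI M p g)"
    using mI_add[OF f g] p by simp
  then show fin: "mI M p (\<lambda>x. f x + g x) < \<infinity>"
    using ff gf by (simp add: ennreal_mult_less_top order_le_less_trans)
  define A where "A = enn2real (mI M p (\<lambda>x. f x + g x))"
  define B where "B = enn2real (mI M p f)"
  define C where "C = enn2real (mI M p g)"
  have eA: "mI M p (\<lambda>x. f x + g x) = ennreal A" "0 \<le> A" using fin by (auto simp: A_def)
  have eB: "mI M p f = ennreal B" "0 \<le> B" using ff by (auto simp: B_def)
  have eC: "mI M p g = ennreal C" "0 \<le> C" using gf by (auto simp: C_def)
  have "ennreal A \<le> ennreal (2 powr p * (B + C))"
    using le eA eB eC by (simp add: ennreal_mult ennreal_plus)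
  then have AB: "A \<le> 2 powr p * (B + C)" using eB eC by (simp add: ennreal_le_iff)
  define b where "b = mosc M p f"
  define c where "c = mosc M p g"
  have mpos: "0 < m" using pos .
  have bp: "b powr p = B / m" using p eB mpos by (simp add: b_def mosc_def B_def[symmetric] powr_powr)
  have cp: "c powr p = C / m" using p eC mpos by (simp add: c_def mosc_def C_def[symmetric] powr_powr)
  have b0: "0 \<le> b" "0 \<le> c" by (auto simp: b_def c_def mosc_nonneg)
  have "B / m + C / m \<le> 2 * (b + c) powr p"
  proof -
    have "b powr p \<le> (b + c) powr p" "c powr p \<le> (b + c) powr p"
      using b0 p by (auto intro!: powr_mono2)
    then show ?thesis using bp cp by simp
  qed
  have "A / m \<le> 2 powr p * (B + C) / m" using AB mpos by (simp add: divide_right_mono)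
  also have "\<dots> = 2 powr p * (B / m + C / m)" using mpos by (simp add: field_simps)
  also have "\<dots> \<le> 2 powr p * (2 * (b + c) powr p)"
    using \<open>B / m + C / m \<le> 2 * (b + c) powr p\<close> by (intro mult_left_mono) auto
  finally have "A / m \<le> (2 powr p * 2) * (b + c) powr p" by simp
  then have "(A / m) powr (1/p) \<le> (2 powr p * 2) powr (1/p) * (b + c)"
    using eA mpos b0 p by (intro powr_le_helper) auto
  moreover have "(2 powr p * 2) powr (1/p) = 2 * 2 powr (1/p)"
    using p by (simp add: powr_mult powr_powr)
  moreover have "2 * 2 powr (1/p) \<le> (4::real)" using two_powr_le[OF p] by simp
  ultimately have "(A / m) powr (1/p) \<le> 4 * (b + c)"
    using b0 by (metis mult_right_mono order_trans add_nonneg_nonneg)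
  then show "mosc M p (\<lambda>x. f x + g x) \<le> 4 * (mosc M p f + mosc M p g)"
    by (simp add: mosc_def A_def b_def c_def)
qed

end
lemma summable_JN:
  fixes q c2 :: real
  assumes c2: "0 < c2"
  shows "summable (\<lambda>k. (real k + 2) powr q * exp (-c2 * (real k + 1)))"
proof (rule summable_comparison_test_ev)
  have lim: "((\<lambda>k. (real k + 2) powr q * exp (-c2 * (real k + 1)) * (real k)^2) \<longlongrightarrow> 0) at_top"
    using c2 by real_asymp
  then have ev: "eventually (\<lambda>k. (real k + 2) powr q * exp (-c2 * (real k + 1)) * (real k)^2 < 1) at_top"
    by (rule order_tendstoD) simp
  show "eventually (\<lambda>k. norm ((real k + 2) powr q * exp (-c2 * (real k + 1))) \<le> inverse (real k ^ 2)) at_top"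
    using ev eventually_gt_at_top[of "0::nat"]
  proof eventually_elim
    case (elim k)
    then show ?case by (simp add: field_simps)
  qed
  show "summable (\<lambda>k. inverse (real k ^ 2))"
    using inverse_power_summable[of 2] by simp
qed

lemma ceil_bracket:
  fixes u :: real assumes "1 < u"
  obtains k :: nat where "real k + 1 < u" "u \<le> real k + 2"
proof -
  define k where "k = nat (\<lceil>u\<rceil> - 2)"
  have c: "\<lceil>u\<rceil> \<ge> 2" using assms by (simp add: le_ceiling_iff)
  have rk: "real k = real_of_int \<lceil>u\<rceil> - 2" using c by (simp add: k_def)
  have "real_of_int \<lceil>u\<rceil> - 1 < u" by linarith
  moreover have "u \<le> real_of_int \<lceil>u\<rceil>" by (rule le_of_int_ceiling)
  ultimately show ?thesis using that[of k] rk by simp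
qed

context fpm begin

lemma JN_bound:
  assumes f: "integrable M f" and q: "0 < q" and c2: "0 < c2" and c1: "0 \<le> c1"
    and jn: "\<And>\<alpha>. \<alpha> > 0 \<Longrightarrow> measure M {x\<in>space M. \<bar>f x - mavg M f\<bar> > \<alpha>} \<le> c1 * m * exp (-c2*\<alpha>)"
  shows "mI M q f \<le> ennreal (m * (1 + c1 * (\<Sum>k. (real k + 2) powr q * exp (-c2 * (real k + 1)))))"
proof -
  define u where "u x = \<bar>f x - mavg M f\<bar>" for x
  define a where "a k = (real k + 2) powr q * exp (-c2 * (real k + 1))" for k :: nat
  define E where "E k = {x\<in>space M. u x > real k + 1}" for k :: nat
  have suma: "summable a" unfolding a_def by (rule summable_JN[OF c2])
  have a0: "0 \<le> a k" for k by (simp add: a_def)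
  have fm[measurable]: "f \<in> borel_measurable M" using f by auto
  have um[measurable]: "u \<in> borel_measurable M" unfolding u_def[abs_def] by measurable
  have Em[measurable]: "E k \<in> sets M" for k unfolding E_def by measurable
  have pt: "ennreal (u x powr q) \<le> 1 + (\<Sum>k. ennreal ((real k + 2) powr q) * indicator (E k) x)"
    if x: "x \<in> space M" for x
  proof (cases "u x \<le> 1")
    case True
    then have "u x powr q \<le> 1 powr q" using q by (intro powr_mono2) (auto simp: u_def)
    then have "ennreal (u x powr q) \<le> 1" by (simp add: ennreal_le_1)
    then show ?thesis by (simp add: add_increasing2)
  next
    case False
    then obtain k where k: "real k + 1 < u x" "u x \<le> real k + 2"
      using ceil_bracket[of "u x"] by auto
    have "u x powr q \<le> (real k + 2) powr q" using k q by (intro powr_mono2) (auto simp: u_def)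
    then have "ennreal (u x powr q) \<le> ennreal ((real k + 2) powr q) * indicator (E k) x"
      using k x by (simp add: E_def ennreal_leI)
    also have "\<dots> \<le> (\<Sum>k. ennreal ((real k + 2) powr q) * indicator (E k) x)"
    proof -
      define F where "F = (\<lambda>k. ennreal ((real k + 2) powr q) * indicator (E k) x)"
      have "sum F {k} \<le> suminf F" by (rule sum_le_suminf) (auto intro: summableI)
      then have "F k \<le> suminf F" by simp
      then show ?thesis by (simp only: F_def)
    qed
    finally show ?thesis by (simp add: add_increasing)
  qed
  have "mI M q f = (\<integral>\<^sup>+x. ennreal (u x powr q) \<partial>M)" by (simp add: mI_def u_def)
  also have "\<dots> \<le> (\<integral>\<^sup>+x. 1 + (\<Sum>k. ennreal ((real k + 2) powr q) * indicator (E k) x) \<partial>M)"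
    by (intro nn_integral_mono pt)
  also have "\<dots> = (\<integral>\<^sup>+x. 1 \<partial>M) + (\<Sum>k. \<integral>\<^sup>+x. ennreal ((real k + 2) powr q) * indicator (E k) x \<partial>M)"
    by (subst nn_integral_add) (auto simp: nn_integral_suminf)
  also have "(\<Sum>k. \<integral>\<^sup>+x. ennreal ((real k + 2) powr q) * indicator (E k) x \<partial>M)
      = (\<Sum>k. ennreal ((real k + 2) powr q) * emeasure M (E k))"
    by (simp add: nn_integral_cmult_indicator)
  also have "\<dots> \<le> (\<Sum>k. ennreal (c1 * m * a k))"
  proof (intro suminf_le summableI)
    fix k
    have "measure M (E k) \<le> c1 * m * exp (-c2 * (real k + 1))"
      unfolding E_def u_def by (rule jn) simp
    then have "ennreal ((real k + 2) powr q) * emeasure M (E k) \<le> ennreal ((real k + 2) powr q) * ennreal (c1 * m * exp (-c2 * (real k + 1)))"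
      by (intro mult_left_mono) (auto simp: emeasure_eq_measure ennreal_leI)
    also have "\<dots> = ennreal (c1 * m * a k)"
      using c1 pos by (simp add: a_def ennreal_mult[symmetric] mult_ac)
    finally show "ennreal ((real k + 2) powr q) * emeasure M (E k) \<le> ennreal (c1 * m * a k)" .
  qed
  also have "(\<Sum>k. ennreal (c1 * m * a k)) = ennreal (\<Sum>k. c1 * m * a k)"
    using c1 pos a0 suma by (intro suminf_ennreal2) (auto intro: summable_mult)
  also have "(\<Sum>k. c1 * m * a k) = c1 * m * (\<Sum>k. a k)"
    using suma by (rule suminf_mult)
  also have "(\<integral>\<^sup>+x. 1 \<partial>M) = ennreal m" by (simp add: emeasure_eq_measure)
  also have "ennreal m + ennreal (c1 * m * (\<Sum>k. a k)) = ennreal (m * (1 + c1 * (\<Sum>k. a k)))"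
  proof -
    have "0 \<le> (\<Sum>k. a k)" using a0 suma by (intro suminf_nonneg) auto
    then have "0 \<le> c1 * m * (\<Sum>k. a k)" using c1 pos by simp
    then show ?thesis using pos by (subst ennreal_plus[symmetric]) (auto simp: algebra_simps)
  qed
  finally show ?thesis by (simp add: a_def)
qed

end


abbreviation R :: "'a::euclidean_space set \<Rightarrow> 'a measure" where
  "R S \<equiv> restrict_space lebesgue S"

lemma open_sets_lebesgue: "open S \<Longrightarrow> S \<in> sets lebesgue"
  by (metis borel_open sets_completionI_sets sets_lborel)

lemma open_pos_measure:
  fixes S :: "'a::euclidean_space set"
  assumes "open S" "x \<in> S"
  shows "0 < emeasure lebesgue S"
proof -
  obtain e where e: "0 < e" "ball x e \<subseteq> S" using assms openE by blast
  then obtain a b where box: "x \<in> box a b" "box a b \<subseteq> S"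
    by (metis rational_boxes order_trans)
  then have "0 < emeasure lebesgue (box a b)"
    by (auto simp: emeasure_lborel_box_eq mem_box algebra_simps intro!: prod_pos)
  also have "\<dots> \<le> emeasure lebesgue S"
    using assms box by (auto intro!: emeasure_mono open_sets_lebesgue)
  finally show ?thesis .
qed

lemma shape_sets: "shape S \<Longrightarrow> S \<in> sets lebesgue"
  by (simp add: shape_def open_sets_lebesgue)

lemma shape_space_R: "shape S \<Longrightarrow> space (R S) = S"
  by (simp add: shape_sets)

lemma shape_measure: assumes "shape S" shows "measure (R S) (space (R S)) = measure lebesgue S"
proof -
  have "S \<in> sets lebesgue" using shape_sets[OF assms] .
  then show ?thesis by (simp add: measure_restrict_space)
qed

lemma shape_measure': assumes "shape S" shows "measure (R S) S = measure lebesgue S"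
  using shape_measure[OF assms] shape_space_R[OF assms] by simp

lemma shape_measure_pos: assumes "shape S" shows "0 < measure lebesgue S"
proof -
  have a: "0 < emeasure lebesgue S" "emeasure lebesgue S < \<infinity>" using assms by (auto simp: shape_def)
  then have "emeasure lebesgue S = ennreal (measure lebesgue S)" by (intro emeasure_eq_ennreal_measure) auto
  with a(1) show ?thesis by (metis ennreal_less_zero_iff)
qed

lemma shape_fpm: "shape S \<Longrightarrow> fpm (R S)"
proof -
  assume S: "shape S"
  have "finite_measure (R S)"
    using S shape_sets[OF S] by (intro finite_measureI) (auto simp: emeasure_restrict_space shape_def)
  moreover have "0 < measure (R S) (space (R S))" using S by (simp only: shape_measure shape_measure_pos)
  ultimately show ?thesis by (simp add: fpm_def fpm_axioms_def)
qed

lemma shape_nonempty: "shape S \<Longrightarrow> S \<noteq> {}"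
  unfolding shape_def by auto

lemma avg_R: assumes S: "shape S" shows "avg f S = mavg (R S) f"
proof -
  have Ss: "S \<in> sets lebesgue" using shape_sets[OF S] .
  have "integral\<^sup>L (R S) f = integral\<^sup>L lebesgue (\<lambda>x. indicator S x *\<^sub>R f x)"
    by (rule integral_restrict_space) (simp add: Ss)
  then show ?thesis
    unfolding avg_def mavg_def set_lebesgue_integral_def shape_measure[OF S] by simp
qed

lemma setnn_R: assumes S: "shape S" shows "(\<integral>\<^sup>+x\<in>S. g x \<partial>lebesgue) = (\<integral>\<^sup>+x. g x \<partial>R S)"
proof -
  have Ss: "S \<in> sets lebesgue" using shape_sets[OF S] .
  have "(\<integral>\<^sup>+x. g x \<partial>R S) = (\<integral>\<^sup>+x. g x * indicator S x \<partial>lebesgue)"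
    by (rule nn_integral_restrict_space) (simp add: Ss)
  then show ?thesis by simp
qed

lemma setint_R: fixes f :: "'a::euclidean_space \<Rightarrow> real" assumes S: "shape S" shows "set_integrable lebesgue S f \<longleftrightarrow> integrable (R S) f"
proof -
  have Ss: "S \<in> sets lebesgue" using shape_sets[OF S] .
  show ?thesis by (rule set_integrable_eq) (simp add: Ss)
qed

lemma Ip_R: "shape S \<Longrightarrow> (\<integral>\<^sup>+ x\<in>S. ennreal (\<bar>f x - avg f S\<bar> powr p) \<partial>lebesgue) = mI (R S) p f"
  by (simp add: setnn_R avg_R mI_def)

lemma osc_R: "shape S \<Longrightarrow> bmo_osc p f S = mosc (R S) p f"
  by (simp add: bmo_osc_def mosc_def Ip_R shape_measure shape_measure')

lemma in_BMO_R:
  assumes "\<forall>S\<in>\<S>. shape S"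
  shows "in_BMO p \<S> f \<longleftrightarrow> (\<forall>S\<in>\<S>. integrable (R S) f) \<and> (\<forall>S\<in>\<S>. mI (R S) p f < \<infinity>)
     \<and> bdd_above ((\<lambda>S. mosc (R S) p f) ` \<S>)"
  using assms by (simp add: in_BMO_def setint_R Ip_R osc_R cong: image_cong)

lemma norm_R:
  assumes "\<forall>S\<in>\<S>. shape S"
  shows "bmo_norm p \<S> f = (SUP S\<in>\<S>. mosc (R S) p f)"
  using assms by (simp add: bmo_norm_def osc_R cong: SUP_cong)

lemma JN_R:
  assumes "shape S"
  shows "measure lebesgue {x\<in>S. \<bar>f x - avg f S\<bar> > \<alpha>} = measure (R S) {x\<in>space (R S). \<bar>f x - mavg (R S) f\<bar> > \<alpha>}"
  using assms by (simp add: avg_R shape_sets measure_restrict_space shape_space_R)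



lemma BMO_mono:
  assumes B: "\<forall>S\<in>\<S>. shape S" and f: "in_BMO q \<S> f" and p: "1 \<le> p" "p \<le> q"
  shows "in_BMO p \<S> f" "\<And>S. S \<in> \<S> \<Longrightarrow> mosc (R S) p f \<le> 2 * mosc (R S) q f"
proof -
  have fi: "\<And>S. S\<in>\<S> \<Longrightarrow> integrable (R S) f" and ff: "\<And>S. S\<in>\<S> \<Longrightarrow> mI (R S) q f < \<infinity>"
    and fb: "bdd_above ((\<lambda>S. mosc (R S) q f) ` \<S>)"
    using f B by (auto simp: in_BMO_R)
  obtain b where b: "\<And>S. S\<in>\<S> \<Longrightarrow> mosc (R S) q f \<le> b" using fb by (auto simp: bdd_above_def)
  have *: "mI (R S) p f < \<infinity> \<and> mosc (R S) p f \<le> 2 * mosc (R S) q f" if S: "S \<in> \<S>" for S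
  proof -
    interpret fpm "R S" using B S shape_fpm by blast
    show ?thesis using mosc_mono[OF fi[OF S] p ff[OF S]] by auto
  qed
  then show "\<And>S. S \<in> \<S> \<Longrightarrow> mosc (R S) p f \<le> 2 * mosc (R S) q f" by blast
  have "bdd_above ((\<lambda>S. mosc (R S) p f) ` \<S>)"
    unfolding bdd_above_def using * b by (intro exI[of _ "2*b"]) force
  then show "in_BMO p \<S> f" using B fi * by (auto simp: in_BMO_R)
qed

lemma JN_in_BMO:
  assumes B: "\<forall>S\<in>\<S>. shape S" and fi: "\<forall>S\<in>\<S>. integrable (R S) f"
    and jn: "john_nirenberg \<Omega> \<S> f" and q: "0 < q"
  shows "in_BMO q \<S> f"
proof -
  obtain c1 c2 where c1: "c1 > 0" and c2: "c2 > 0" and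
    J: "\<And>S \<alpha>. S\<in>\<S> \<Longrightarrow> \<alpha> > 0 \<Longrightarrow> measure lebesgue {x\<in>S. \<bar>f x - avg f S\<bar> > \<alpha>} \<le> c1 * measure lebesgue S * exp (- c2 * \<alpha>)"
    using jn unfolding john_nirenberg_def by blast
  define K where "K = 1 + c1 * (\<Sum>k. (real k + 2) powr q * exp (-c2 * (real k + 1)))"
  have K0: "0 \<le> K" unfolding K_def using c1 summable_JN[OF c2, of q]
    by (intro add_nonneg_nonneg mult_nonneg_nonneg suminf_nonneg) auto
  have *: "mI (R S) q f < \<infinity> \<and> mosc (R S) q f \<le> K powr (1/q)" if S: "S \<in> \<S>" for S
  proof -
    have sh: "shape S" using B S by blast
    interpret fpm "R S" using sh shape_fpm by blast
    have le: "mI (R S) q f \<le> ennreal (m * K)"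
      unfolding K_def
    proof (rule JN_bound[OF fi[rule_format, OF S] q c2 less_imp_le[OF c1]])
      fix \<alpha> :: real assume "\<alpha> > 0"
      then show "measure (R S) {x\<in>space (R S). \<bar>f x - mavg (R S) f\<bar> > \<alpha>} \<le> c1 * m * exp (-c2*\<alpha>)"
      proof -
        have "measure (R S) {x\<in>space (R S). \<bar>f x - mavg (R S) f\<bar> > \<alpha>} = measure lebesgue {x\<in>S. \<bar>f x - avg f S\<bar> > \<alpha>}"
          using JN_R[OF sh, where f=f and \<alpha>=\<alpha>] by simp
        also have "\<dots> \<le> c1 * measure lebesgue S * exp (- c2 * \<alpha>)" using J[OF S \<open>\<alpha> > 0\<close>] .
        also have "measure lebesgue S = m" using shape_measure[OF sh] by simp
        finally show ?thesis .
      qed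
    qed
    have "mI (R S) q f < top" using le ennreal_less_top[of "m*K"] by (rule le_less_trans)
    then have fin: "mI (R S) q f < \<infinity>" by simp
    have "enn2real (mI (R S) q f) \<le> enn2real (ennreal (m * K))"
      by (rule enn2real_mono[OF le]) simp
    also have "enn2real (ennreal (m * K)) = m * K" using K0 pos by simp
    finally have "enn2real (mI (R S) q f) \<le> m * K" .
    then have "enn2real (mI (R S) q f) / m \<le> K" using pos by (simp add: divide_le_eq mult.commute)
    then have "mosc (R S) q f \<le> K powr (1/q)" unfolding mosc_def using q by (intro powr_mono2) auto
    then show ?thesis using fin by blast
  qed
  have "bdd_above ((\<lambda>S. mosc (R S) q f) ` \<S>)"
    unfolding bdd_above_def using * by (intro exI[of _ "K powr (1/q)"]) force
  then show ?thesis using B fi * by (auto simp: in_BMO_R)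
qed

lemma BMO_cmult:
  assumes B: "\<forall>S\<in>\<S>. shape S" and f: "in_BMO p \<S> f" and p: "0 < p"
  shows "in_BMO p \<S> (\<lambda>x. c * f x)" "\<And>S. S \<in> \<S> \<Longrightarrow> mosc (R S) p (\<lambda>x. c * f x) = \<bar>c\<bar> * mosc (R S) p f"
proof -
  have fi: "\<And>S. S\<in>\<S> \<Longrightarrow> integrable (R S) f" and ff: "\<And>S. S\<in>\<S> \<Longrightarrow> mI (R S) p f < \<infinity>"
    and fb: "bdd_above ((\<lambda>S. mosc (R S) p f) ` \<S>)"
    using f B by (auto simp: in_BMO_R)
  obtain b where b: "\<And>S. S\<in>\<S> \<Longrightarrow> mosc (R S) p f \<le> b" using fb by (auto simp: bdd_above_def)
  have *: "integrable (R S) (\<lambda>x. c * f x) \<and> mI (R S) p (\<lambda>x. c * f x) < \<infinity> \<and> mosc (R S) p (\<lambda>x. c * f x) = \<bar>c\<bar> * mosc (R S) p f" if S: "S \<in> \<S>" for S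
  proof -
    interpret fpm "R S" using B S shape_fpm by blast
    have m: "f \<in> borel_measurable (R S)" using fi[OF S] by auto
    show ?thesis using mosc_cmult[OF m p] mI_cmult_fin[OF m p ff[OF S]] fi[OF S] by auto
  qed
  then show "\<And>S. S \<in> \<S> \<Longrightarrow> mosc (R S) p (\<lambda>x. c * f x) = \<bar>c\<bar> * mosc (R S) p f" by blast
  have "bdd_above ((\<lambda>S. mosc (R S) p (\<lambda>x. c * f x)) ` \<S>)"
    unfolding bdd_above_def using * b by (intro exI[of _ "\<bar>c\<bar> * b"]) (force intro: mult_left_mono)
  then show "in_BMO p \<S> (\<lambda>x. c * f x)" using B * by (auto simp: in_BMO_R)
qed

lemma BMO_add_const:
  assumes B: "\<forall>S\<in>\<S>. shape S" and f: "in_BMO p \<S> f"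
  shows "in_BMO p \<S> (\<lambda>x. f x + c)" "\<And>S. S \<in> \<S> \<Longrightarrow> mosc (R S) p (\<lambda>x. f x + c) = mosc (R S) p f"
    "\<And>S. S \<in> \<S> \<Longrightarrow> mavg (R S) (\<lambda>x. f x + c) = mavg (R S) f + c"
proof -
  have fi: "\<And>S. S\<in>\<S> \<Longrightarrow> integrable (R S) f" and ff: "\<And>S. S\<in>\<S> \<Longrightarrow> mI (R S) p f < \<infinity>"
    and fb: "bdd_above ((\<lambda>S. mosc (R S) p f) ` \<S>)"
    using f B by (auto simp: in_BMO_R)
  have *: "integrable (R S) (\<lambda>x. f x + c) \<and> mI (R S) p (\<lambda>x. f x + c) = mI (R S) p f \<and> mosc (R S) p (\<lambda>x. f x + c) = mosc (R S) p f
     \<and> mavg (R S) (\<lambda>x. f x + c) = mavg (R S) f + c" if S: "S \<in> \<S>" for S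
  proof -
    interpret fpm "R S" using B S shape_fpm by blast
    have i: "integrable (R S) (\<lambda>x. f x + c)" using fi[OF S] by simp
    show ?thesis using i mI_add_const[OF fi[OF S]] mosc_add_const[OF fi[OF S]] mavg_add_const[OF fi[OF S]] by simp
  qed
  then show "\<And>S. S \<in> \<S> \<Longrightarrow> mosc (R S) p (\<lambda>x. f x + c) = mosc (R S) p f"
    "\<And>S. S \<in> \<S> \<Longrightarrow> mavg (R S) (\<lambda>x. f x + c) = mavg (R S) f + c" by blast+
  have eq: "(\<lambda>S. mosc (R S) p (\<lambda>x. f x + c)) ` \<S> = (\<lambda>S. mosc (R S) p f) ` \<S>"
    by (rule image_cong) (use * in auto)
  show "in_BMO p \<S> (\<lambda>x. f x + c)" unfolding in_BMO_R[OF B] eq using * ff fb by simp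
qed

lemma BMO_add:
  assumes B: "\<forall>S\<in>\<S>. shape S" and f: "in_BMO p \<S> f" and g: "in_BMO p \<S> g" and p: "1 \<le> p"
  shows "in_BMO p \<S> (\<lambda>x. f x + g x)"
    "\<And>S. S \<in> \<S> \<Longrightarrow> mosc (R S) p (\<lambda>x. f x + g x) \<le> 4 * (mosc (R S) p f + mosc (R S) p g)"
proof -
  have fi: "\<And>S. S\<in>\<S> \<Longrightarrow> integrable (R S) f" and ff: "\<And>S. S\<in>\<S> \<Longrightarrow> mI (R S) p f < \<infinity>"
    and fb: "bdd_above ((\<lambda>S. mosc (R S) p f) ` \<S>)"
    using f B by (auto simp: in_BMO_R)
  have gi: "\<And>S. S\<in>\<S> \<Longrightarrow> integrable (R S) g" and gf: "\<And>S. S\<in>\<S> \<Longrightarrow> mI (R S) p g < \<infinity>"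
    and gb: "bdd_above ((\<lambda>S. mosc (R S) p g) ` \<S>)"
    using g B by (auto simp: in_BMO_R)
  obtain b where b: "\<And>S. S\<in>\<S> \<Longrightarrow> mosc (R S) p f \<le> b" using fb by (auto simp: bdd_above_def)
  obtain b' where b': "\<And>S. S\<in>\<S> \<Longrightarrow> mosc (R S) p g \<le> b'" using gb by (auto simp: bdd_above_def)
  have *: "integrable (R S) (\<lambda>x. f x + g x) \<and> mI (R S) p (\<lambda>x. f x + g x) < \<infinity> \<and>
      mosc (R S) p (\<lambda>x. f x + g x) \<le> 4 * (mosc (R S) p f + mosc (R S) p g)" if S: "S \<in> \<S>" for S
  proof -
    interpret fpm "R S" using B S shape_fpm by blast
    show ?thesis using mosc_add[OF fi[OF S] gi[OF S] p ff[OF S] gf[OF S]] fi[OF S] gi[OF S] by auto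
  qed
  then show "\<And>S. S \<in> \<S> \<Longrightarrow> mosc (R S) p (\<lambda>x. f x + g x) \<le> 4 * (mosc (R S) p f + mosc (R S) p g)" by blast
  have bb: "mosc (R S) p (\<lambda>x. f x + g x) \<le> 4 * (b + b')" if S: "S \<in> \<S>" for S
  proof -
    have "mosc (R S) p (\<lambda>x. f x + g x) \<le> 4 * (mosc (R S) p f + mosc (R S) p g)" using * S by blast
    also have "\<dots> \<le> 4 * (b + b')" using b[OF S] b'[OF S] by simp
    finally show ?thesis .
  qed
  have "bdd_above ((\<lambda>S. mosc (R S) p (\<lambda>x. f x + g x)) ` \<S>)"
    unfolding bdd_above_def using bb by blast
  then show "in_BMO p \<S> (\<lambda>x. f x + g x)" using B * by (auto simp: in_BMO_R)
qed



lemma mosc_ge0: "0 \<le> mosc M p f"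
  by (simp add: mosc_def)

lemma shape_int_measure_pos:
  assumes S: "shape S" and S': "shape S'" and ne: "S \<inter> S' \<noteq> {}"
  shows "0 < measure lebesgue (S \<inter> S')"
proof -
  obtain x where x: "x \<in> S \<inter> S'" using ne by blast
  have o: "open (S \<inter> S')" using S S' by (auto simp: shape_def)
  have p: "0 < emeasure lebesgue (S \<inter> S')" by (rule open_pos_measure[OF o x])
  have "emeasure lebesgue (S \<inter> S') \<le> emeasure lebesgue S"
    using S by (intro emeasure_mono) (auto simp: shape_sets)
  then have f: "emeasure lebesgue (S \<inter> S') < \<infinity>" using S by (auto simp: shape_def)
  then have "emeasure lebesgue (S \<inter> S') = ennreal (measure lebesgue (S \<inter> S'))"
    by (intro emeasure_eq_ennreal_measure) auto
  with p show ?thesis by (metis ennreal_less_zero_iff)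
qed

lemma meas_R_ennreal:
  assumes S: "shape S" and h: "integrable (R S) h"
  shows "(\<lambda>x. ennreal \<bar>h x - a\<bar> * indicator S x) \<in> borel_measurable lebesgue"
proof -
  have "(\<lambda>x. ennreal \<bar>h x - a\<bar>) \<in> borel_measurable (R S)" using h by auto
  then show ?thesis using shape_sets[OF S]
    by (subst (asm) borel_measurable_restrict_space_iff_ennreal) auto
qed

lemma overlap:
  assumes B: "\<forall>S\<in>\<S>. shape S" and h: "in_BMO p \<S> h" and p: "1 \<le> p"
    and S: "S \<in> \<S>" and S': "S' \<in> \<S>" and ne: "S \<inter> S' \<noteq> {}"
    and eps: "\<forall>T\<in>\<S>. mosc (R T) p h \<le> \<epsilon>"
  shows "\<bar>mavg (R S) h - mavg (R S') h\<bar> \<le> 2 * (measure lebesgue S + measure lebesgue S') / measure lebesgue (S \<inter> S') * \<epsilon>"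
proof -
  have sS: "shape S" and sS': "shape S'" using B S S' by auto
  have hi: "integrable (R S) h" "integrable (R S') h" and hf: "mI (R S) p h < \<infinity>" "mI (R S') p h < \<infinity>"
    using h B S S' by (auto simp: in_BMO_R)
  define a where "a = mavg (R S) h"
  define a' where "a' = mavg (R S') h"
  define I where "I = S \<inter> S'"
  have Ipos: "0 < measure lebesgue I" unfolding I_def by (rule shape_int_measure_pos[OF sS sS' ne])
  have Isets: "I \<in> sets lebesgue" using sS sS' by (auto simp: I_def shape_sets)
  have Ifin: "emeasure lebesgue I = ennreal (measure lebesgue I)"
  proof -
    have "emeasure lebesgue I \<le> emeasure lebesgue S" using sS by (intro emeasure_mono) (auto simp: shape_sets I_def)
    then have "emeasure lebesgue I < \<infinity>" using sS by (auto simp: shape_def)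
    then show ?thesis by (intro emeasure_eq_ennreal_measure) auto
  qed
  have e0: "0 \<le> \<epsilon>" using eps S mosc_ge0[of "R S" p h] by (meson order_trans)
  have L1: "(\<integral>\<^sup>+x. ennreal \<bar>h x - mavg (R T) h\<bar> * indicator T x \<partial>lebesgue) \<le> ennreal (2 * measure lebesgue T * \<epsilon>)"
    if T: "T \<in> \<S>" for T
  proof -
    have sT: "shape T" using B T by auto
    interpret fpm "R T" using shape_fpm[OF sT] .
    have hiT: "integrable (R T) h" and hfT: "mI (R T) p h < \<infinity>" using h B T by (auto simp: in_BMO_R)
    have "(\<integral>\<^sup>+x. ennreal \<bar>h x - mavg (R T) h\<bar> * indicator T x \<partial>lebesgue) = (\<integral>\<^sup>+x. ennreal \<bar>h x - mavg (R T) h\<bar> \<partial>R T)"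
      using setnn_R[OF sT, of "\<lambda>x. ennreal \<bar>h x - mavg (R T) h\<bar>"] by simp
    also have "\<dots> \<le> ennreal (2 * m * mosc (R T) p h)" by (rule L1_bound[OF hiT p hfT])
    also have "\<dots> \<le> ennreal (2 * measure lebesgue T * \<epsilon>)"
    proof (intro ennreal_leI)
      have "m * mosc (R T) p h \<le> m * \<epsilon>" using eps T pos by (intro mult_left_mono) auto
      then show "2 * m * mosc (R T) p h \<le> 2 * measure lebesgue T * \<epsilon>"
        using shape_measure[OF sT] by simp
    qed
    finally show ?thesis .
  qed
  have "ennreal (\<bar>a - a'\<bar> * measure lebesgue I) = ennreal \<bar>a - a'\<bar> * emeasure lebesgue I"
    unfolding Ifin by (rule ennreal_mult) auto
  also have "\<dots> = (\<integral>\<^sup>+x. ennreal \<bar>a - a'\<bar> * indicator I x \<partial>lebesgue)"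
    by (rule nn_integral_cmult_indicator[OF Isets, symmetric])
  also have "\<dots> \<le> (\<integral>\<^sup>+x. ennreal \<bar>h x - a\<bar> * indicator S x + ennreal \<bar>h x - a'\<bar> * indicator S' x \<partial>lebesgue)"
  proof (intro nn_integral_mono)
    fix x
    show "ennreal \<bar>a - a'\<bar> * indicator I x \<le> ennreal \<bar>h x - a\<bar> * indicator S x + ennreal \<bar>h x - a'\<bar> * indicator S' x"
    proof (cases "x \<in> I")
      case True
      then have "x \<in> S" "x \<in> S'" by (auto simp: I_def)
      moreover have "ennreal \<bar>a - a'\<bar> \<le> ennreal (\<bar>h x - a\<bar> + \<bar>h x - a'\<bar>)" by (intro ennreal_leI) linarith
      ultimately show ?thesis using True by (simp add: ennreal_plus)
    qed simp
  qed
  also have "\<dots> = (\<integral>\<^sup>+x. ennreal \<bar>h x - a\<bar> * indicator S x \<partial>lebesgue) + (\<integral>\<^sup>+x. ennreal \<bar>h x - a'\<bar> * indicator S' x \<partial>lebesgue)"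
    by (rule nn_integral_add) (auto intro: meas_R_ennreal[OF sS hi(1)] meas_R_ennreal[OF sS' hi(2)])
  also have "\<dots> \<le> ennreal (2 * measure lebesgue S * \<epsilon>) + ennreal (2 * measure lebesgue S' * \<epsilon>)"
    using L1[OF S] L1[OF S'] by (intro add_mono) (auto simp: a_def a'_def)
  also have "\<dots> = ennreal (2 * (measure lebesgue S + measure lebesgue S') * \<epsilon>)"
    using e0 by (simp add: ennreal_plus[symmetric] algebra_simps del: ennreal_plus)
  finally have "\<bar>a - a'\<bar> * measure lebesgue I \<le> 2 * (measure lebesgue S + measure lebesgue S') * \<epsilon>"
    using e0 by (subst (asm) ennreal_le_iff) auto
  then show ?thesis using Ipos by (simp add: a_def a'_def I_def field_simps)
qed

lemma chain:
  assumes dom: "domain \<Omega>" and bas: "basis_of_shapes \<S> \<Omega>" and p: "1 \<le> p" and S0: "S0 \<in> \<S>"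
  shows "\<forall>S\<in>\<S>. \<exists>K\<ge>0. \<forall>h \<epsilon>. in_BMO p \<S> h \<and> (\<forall>T\<in>\<S>. mosc (R T) p h \<le> \<epsilon>) \<longrightarrow>
            \<bar>mavg (R S) h - mavg (R S0) h\<bar> \<le> K * \<epsilon>"
proof -
  have B: "\<forall>S\<in>\<S>. shape S" and sub: "\<forall>S\<in>\<S>. S \<subseteq> \<Omega>" and cov: "\<Union>\<S> = \<Omega>"
    using bas by (auto simp: basis_of_shapes_def)
  define A where "A = {S\<in>\<S>. \<exists>K\<ge>0. \<forall>h \<epsilon>. in_BMO p \<S> h \<and> (\<forall>T\<in>\<S>. mosc (R T) p h \<le> \<epsilon>) \<longrightarrow>
            \<bar>mavg (R S) h - mavg (R S0) h\<bar> \<le> K * \<epsilon>}"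
  have A0: "S0 \<in> A" unfolding A_def using S0 by (auto intro!: exI[of _ 0])
  have step: "S' \<in> A" if SA: "S \<in> A" and S': "S' \<in> \<S>" and ne: "S \<inter> S' \<noteq> {}" for S S'
  proof -
    from SA obtain K where K: "K \<ge> 0" and S: "S \<in> \<S>" and
      HK: "\<And>h \<epsilon>. in_BMO p \<S> h \<and> (\<forall>T\<in>\<S>. mosc (R T) p h \<le> \<epsilon>) \<Longrightarrow> \<bar>mavg (R S) h - mavg (R S0) h\<bar> \<le> K * \<epsilon>"
      unfolding A_def by blast
    define c where "c = 2 * (measure lebesgue S + measure lebesgue S') / measure lebesgue (S \<inter> S')"
    have c0: "0 \<le> c" unfolding c_def by (auto intro!: divide_nonneg_nonneg add_nonneg_nonneg)
    have "\<bar>mavg (R S') h - mavg (R S0) h\<bar> \<le> (K + c) * \<epsilon>"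
      if h: "in_BMO p \<S> h" and e: "\<forall>T\<in>\<S>. mosc (R T) p h \<le> \<epsilon>" for h \<epsilon>
    proof -
      have "\<bar>mavg (R S) h - mavg (R S') h\<bar> \<le> c * \<epsilon>"
        unfolding c_def by (rule overlap[OF B h p S S' ne e])
      moreover have "\<bar>mavg (R S) h - mavg (R S0) h\<bar> \<le> K * \<epsilon>" using HK h e by blast
      ultimately show ?thesis by (simp add: algebra_simps)
    qed
    then show ?thesis unfolding A_def using S' K c0 by (intro CollectI conjI exI[of _ "K + c"]) auto
  qed
  define U where "U = \<Union>A"
  define V where "V = \<Union>(\<S> - A)"
  have oU: "open U" unfolding U_def using B by (auto simp: A_def shape_def)
  have oV: "open V" unfolding V_def using B by (auto simp: shape_def)
  have disj: "U \<inter> V \<inter> \<Omega> = {}"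
  proof (rule ccontr)
    assume "U \<inter> V \<inter> \<Omega> \<noteq> {}"
    then obtain x S S' where "x \<in> S" "S \<in> A" "x \<in> S'" "S' \<in> \<S> - A" by (auto simp: U_def V_def)
    then show False using step by blast
  qed
  have covUV: "\<Omega> \<subseteq> U \<union> V" using cov by (auto simp: U_def V_def)
  have "U \<inter> \<Omega> \<noteq> {}"
  proof -
    obtain x where "x \<in> S0" using shape_nonempty B S0 by blast
    then show ?thesis using A0 S0 sub by (auto simp: U_def)
  qed
  then have V0: "V \<inter> \<Omega> = {}" using connectedD[OF _ oU oV disj covUV] dom by (auto simp: domain_def)
  show ?thesis
  proof
    fix S assume S: "S \<in> \<S>"
    have "S \<in> A"
    proof (rule ccontr)
      assume "S \<notin> A"
      then have "S \<subseteq> V" using S by (auto simp: V_def)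
      moreover obtain x where "x \<in> S" using shape_nonempty B S by blast
      ultimately show False using V0 sub S by blast
    qed
    then show "\<exists>K\<ge>0. \<forall>h \<epsilon>. in_BMO p \<S> h \<and> (\<forall>T\<in>\<S>. mosc (R T) p h \<le> \<epsilon>) \<longrightarrow>
            \<bar>mavg (R S) h - mavg (R S0) h\<bar> \<le> K * \<epsilon>" unfolding A_def by blast
  qed
qed



lemma fin_weighted:
  fixes x w :: "nat \<Rightarrow> real" and p :: real
  assumes p: "1 \<le> p" and x: "\<And>j. 0 \<le> x j" and w: "\<And>j. 0 < w j" and ws: "(\<Sum>j<n. w j) \<le> 1"
  shows "(\<Sum>j<n. x j) powr p \<le> (\<Sum>j<n. (x j / w j) powr p)"
proof (cases "n = 0")
  case True then show ?thesis by simp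
next
  case False
  define M where "M = Max ((\<lambda>j. x j / w j) ` {..<n})"
  have fin: "finite ((\<lambda>j. x j / w j) ` {..<n})" by simp
  have ne: "(\<lambda>j. x j / w j) ` {..<n} \<noteq> {}" using False by (simp add: lessThan_empty_iff)
  obtain k where k: "k < n" "M = x k / w k" using Max_in[OF fin ne] unfolding M_def by auto
  have le: "x j / w j \<le> M" if "j < n" for j unfolding M_def using that by (intro Max_ge) auto
  have M0: "0 \<le> M" using k x w by (simp add: less_imp_le)
  have "(\<Sum>j<n. x j) = (\<Sum>j<n. w j * (x j / w j))" using w by (intro sum.cong) (auto simp: less_imp_neq[symmetric])
  also have "\<dots> \<le> (\<Sum>j<n. w j * M)" using le w by (intro sum_mono mult_left_mono) (auto simp: less_imp_le)
  also have "\<dots> = M * (\<Sum>j<n. w j)" by (simp add: sum_distrib_left mult.commute)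
  also have "\<dots> \<le> M" using ws M0 by (simp add: mult_left_le)
  finally have sM: "(\<Sum>j<n. x j) \<le> M" .
  have "(\<Sum>j<n. x j) powr p \<le> M powr p" using sM p x by (intro powr_mono2) (auto intro: sum_nonneg)
  also have "\<dots> = (x k / w k) powr p" using k by simp
  also have "\<dots> \<le> (\<Sum>j<n. (x j / w j) powr p)"
    using k by (intro member_le_sum) auto
  finally show ?thesis .
qed

lemma inf_weighted:
  fixes X w :: "nat \<Rightarrow> real" and p :: real
  assumes p: "1 \<le> p" and X: "summable (\<lambda>j. \<bar>X j\<bar>)" and w: "\<And>j. 0 < w j" and ws: "\<And>n. (\<Sum>j<n. w j) \<le> 1"
  shows "ennreal (\<bar>\<Sum>j. X j\<bar> powr p) \<le> (\<Sum>j. ennreal ((\<bar>X j\<bar> / w j) powr p))"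
proof -
  define s where "s = (\<Sum>j. \<bar>X j\<bar>)"
  have abs_le: "\<bar>\<Sum>j. X j\<bar> \<le> s" unfolding s_def by (rule summable_rabs[OF X])
  have lim: "(\<lambda>n. (\<Sum>j<n. \<bar>X j\<bar>)) \<longlonglongrightarrow> s" unfolding s_def using X by (rule summable_LIMSEQ)
  have limp: "(\<lambda>n. (\<Sum>j<n. \<bar>X j\<bar>) powr p) \<longlonglongrightarrow> s powr p"
    using p by (intro tendsto_powr' lim tendsto_const) (auto intro!: always_eventually sum_nonneg)
  have limE: "(\<lambda>n. ennreal ((\<Sum>j<n. \<bar>X j\<bar>) powr p)) \<longlonglongrightarrow> ennreal (s powr p)"
    by (rule tendsto_ennrealI[OF limp])
  have bound: "ennreal ((\<Sum>j<n. \<bar>X j\<bar>) powr p) \<le> (\<Sum>j. ennreal ((\<bar>X j\<bar> / w j) powr p))" for n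
  proof -
    have "ennreal ((\<Sum>j<n. \<bar>X j\<bar>) powr p) \<le> ennreal (\<Sum>j<n. (\<bar>X j\<bar> / w j) powr p)"
      by (intro ennreal_leI fin_weighted[OF p _ w ws]) simp
    also have "\<dots> = (\<Sum>j<n. ennreal ((\<bar>X j\<bar> / w j) powr p))" by (rule sum_ennreal[symmetric]) simp
    also have "\<dots> \<le> (\<Sum>j. ennreal ((\<bar>X j\<bar> / w j) powr p))" by (rule sum_le_suminf) (auto intro: summableI)
    finally show ?thesis .
  qed
  have "ennreal (s powr p) \<le> (\<Sum>j. ennreal ((\<bar>X j\<bar> / w j) powr p))"
    by (rule LIMSEQ_le_const2[OF limE]) (use bound in auto)
  moreover have "ennreal (\<bar>\<Sum>j. X j\<bar> powr p) \<le> ennreal (s powr p)"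
    using abs_le p by (intro ennreal_leI powr_mono2) auto
  ultimately show ?thesis by (rule order_trans[rotated])
qed

lemma series_on:
  assumes B: "\<forall>S\<in>\<S>. shape S" and p: "1 \<le> p" and S: "S \<in> \<S>"
    and h: "\<And>j. in_BMO p \<S> (h j)" and eps: "\<And>j T. T \<in> \<S> \<Longrightarrow> mosc (R T) p (h j) \<le> \<epsilon> j"
    and es: "summable \<epsilon>" and K: "0 \<le> K" and Kb: "\<And>j. \<bar>mavg (R S) (h j)\<bar> \<le> K * \<epsilon> j"
  shows "integrable (R S) (\<lambda>x. \<Sum>j. h j x)"
    "AE x in R S. summable (\<lambda>j. \<bar>h j x\<bar>)"
    "mavg (R S) (\<lambda>x. \<Sum>j. h j x) = (\<Sum>j. mavg (R S) (h j))"
    "(\<integral>\<^sup>+x. ennreal \<bar>(\<Sum>j. h j x) - mavg (R S) (\<lambda>x. \<Sum>j. h j x)\<bar> \<partial>R S) \<le> ennreal (2 * measure lebesgue S * (\<Sum>j. \<epsilon> j))"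
proof -
  have sh: "shape S" using B S by auto
  interpret fpm "R S" using shape_fpm[OF sh] .
  have mS: "m = measure lebesgue S" using shape_measure[OF sh] .
  have hi: "\<And>j. integrable (R S) (h j)" and hf: "\<And>j. mI (R S) p (h j) < \<infinity>"
    using h B S by (auto simp: in_BMO_R)
  have hm[measurable]: "\<And>j. h j \<in> borel_measurable (R S)" using hi by auto
  have e0: "0 \<le> \<epsilon> j" for j using eps[OF S, of j] mosc_ge0[of "R S" p "h j"] by linarith
  define a where "a j = mavg (R S) (h j)" for j
  have L1j: "(\<integral>\<^sup>+x. ennreal \<bar>h j x - a j\<bar> \<partial>R S) \<le> ennreal (2 * m * \<epsilon> j)" for j
  proof -
    have "(\<integral>\<^sup>+x. ennreal \<bar>h j x - a j\<bar> \<partial>R S) \<le> ennreal (2 * m * mosc (R S) p (h j))"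
      unfolding a_def by (rule L1_bound[OF hi p hf])
    also have "\<dots> \<le> ennreal (2 * m * \<epsilon> j)" using eps[OF S, of j] pos by (intro ennreal_leI) auto
    finally show ?thesis .
  qed
  define C where "C = (2 + K) * m"
  have C0: "0 \<le> C" using K pos by (simp add: C_def)
  have absj: "(\<integral>\<^sup>+x. ennreal \<bar>h j x\<bar> \<partial>R S) \<le> ennreal (C * \<epsilon> j)" for j
  proof -
    have "(\<integral>\<^sup>+x. ennreal \<bar>h j x\<bar> \<partial>R S) \<le> (\<integral>\<^sup>+x. ennreal \<bar>h j x - a j\<bar> + ennreal \<bar>a j\<bar> \<partial>R S)"
      by (intro nn_integral_mono) (simp add: ennreal_plus[symmetric] del: ennreal_plus)
    also have "\<dots> = (\<integral>\<^sup>+x. ennreal \<bar>h j x - a j\<bar> \<partial>R S) + ennreal \<bar>a j\<bar> * ennreal m"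
      by (subst nn_integral_add) (auto simp: emeasure_eq_measure)
    also have "\<dots> \<le> ennreal (2 * m * \<epsilon> j) + ennreal (K * \<epsilon> j) * ennreal m"
      using Kb[of j] by (intro add_mono L1j mult_right_mono ennreal_leI) (auto simp: a_def)
    also have "\<dots> = ennreal (C * \<epsilon> j)"
      using e0[of j] K pos by (simp add: C_def ennreal_mult[symmetric] ennreal_plus[symmetric] algebra_simps del: ennreal_plus)
    finally show ?thesis .
  qed
  have intn: "(\<integral>x. norm (h j x) \<partial>R S) \<le> C * \<epsilon> j" for j
  proof -
    have "ennreal (\<integral>x. norm (h j x) \<partial>R S) = (\<integral>\<^sup>+x. ennreal \<bar>h j x\<bar> \<partial>R S)"
      using hi[of j] by (subst nn_integral_eq_integral) auto
    with absj[of j] have "ennreal (\<integral>x. norm (h j x) \<partial>R S) \<le> ennreal (C * \<epsilon> j)" by simp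
    then show ?thesis using C0 e0[of j] by (subst (asm) ennreal_le_iff) auto
  qed
  have sumn: "summable (\<lambda>j. \<integral>x. norm (h j x) \<partial>R S)"
    by (rule summable_comparison_test[of _ "\<lambda>j. C * \<epsilon> j"]) (use intn es in \<open>auto intro: summable_mult\<close>)
  have "(\<integral>\<^sup>+x. (\<Sum>j. ennreal \<bar>h j x\<bar>) \<partial>R S) = (\<Sum>j. \<integral>\<^sup>+x. ennreal \<bar>h j x\<bar> \<partial>R S)"
    by (rule nn_integral_suminf) auto
  also have "\<dots> \<le> (\<Sum>j. ennreal (C * \<epsilon> j))" by (intro suminf_le absj) (auto intro: summableI)
  also have "\<dots> = ennreal (\<Sum>j. C * \<epsilon> j)" using C0 e0 es by (intro suminf_ennreal2) (auto intro: summable_mult)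
  finally have "(\<integral>\<^sup>+x. (\<Sum>j. ennreal \<bar>h j x\<bar>) \<partial>R S) \<noteq> \<infinity>" by (auto simp: top_unique)
  then have "AE x in R S. (\<Sum>j. ennreal \<bar>h j x\<bar>) \<noteq> \<infinity>" by (intro nn_integral_PInf_AE) auto
  then show AEs: "AE x in R S. summable (\<lambda>j. \<bar>h j x\<bar>)"
    by eventually_elim (auto intro: summable_suminf_not_top)
  have AEs': "AE x in R S. summable (\<lambda>j. norm (h j x))" using AEs by simp
  show gi: "integrable (R S) (\<lambda>x. \<Sum>j. h j x)" by (rule integrable_suminf[OF hi AEs' sumn])
  have gint: "(\<integral>x. (\<Sum>j. h j x) \<partial>R S) = (\<Sum>j. integral\<^sup>L (R S) (h j))" by (rule integral_suminf[OF hi AEs' sumn])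
  have sumi: "summable (\<lambda>j. integral\<^sup>L (R S) (h j))" by (rule summable_integral[OF hi AEs' sumn])
  show mg: "mavg (R S) (\<lambda>x. \<Sum>j. h j x) = (\<Sum>j. mavg (R S) (h j))"
    unfolding mavg_def gint using sumi by (rule suminf_divide[symmetric])
  have sumaa: "summable (\<lambda>j. \<bar>a j\<bar>)"
    by (rule summable_comparison_test[of _ "\<lambda>j. K * \<epsilon> j"]) (use Kb es in \<open>auto simp: a_def intro: summable_mult\<close>)
  have suma: "summable a" using sumaa by (rule summable_rabs_cancel)
  have "(\<integral>\<^sup>+x. ennreal \<bar>(\<Sum>j. h j x) - mavg (R S) (\<lambda>x. \<Sum>j. h j x)\<bar> \<partial>R S) \<le> (\<integral>\<^sup>+x. (\<Sum>j. ennreal \<bar>h j x - a j\<bar>) \<partial>R S)"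
  proof (rule nn_integral_mono_AE)
    show "AE x in R S. ennreal \<bar>(\<Sum>j. h j x) - mavg (R S) (\<lambda>x. \<Sum>j. h j x)\<bar> \<le> (\<Sum>j. ennreal \<bar>h j x - a j\<bar>)"
      using AEs
    proof eventually_elim
      case (elim x)
      have sx: "summable (\<lambda>j. h j x)" using elim by (rule summable_rabs_cancel)
      have sd: "summable (\<lambda>j. \<bar>h j x - a j\<bar>)"
        by (rule summable_comparison_test[of _ "\<lambda>j. \<bar>h j x\<bar> + \<bar>a j\<bar>"])
           (use elim sumaa in \<open>auto intro!: summable_add\<close>)
      have "(\<Sum>j. h j x) - mavg (R S) (\<lambda>x. \<Sum>j. h j x) = (\<Sum>j. h j x - a j)"
        unfolding mg a_def[symmetric] using sx suma by (rule suminf_diff)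
      then have "\<bar>(\<Sum>j. h j x) - mavg (R S) (\<lambda>x. \<Sum>j. h j x)\<bar> \<le> (\<Sum>j. \<bar>h j x - a j\<bar>)"
        using summable_rabs[OF sd] by simp
      then have "ennreal \<bar>(\<Sum>j. h j x) - mavg (R S) (\<lambda>x. \<Sum>j. h j x)\<bar> \<le> ennreal (\<Sum>j. \<bar>h j x - a j\<bar>)"
        by (rule ennreal_leI)
      also have "\<dots> = (\<Sum>j. ennreal \<bar>h j x - a j\<bar>)" using sd by (intro suminf_ennreal2[symmetric]) auto
      finally show ?case .
    qed
  qed
  also have "\<dots> = (\<Sum>j. \<integral>\<^sup>+x. ennreal \<bar>h j x - a j\<bar> \<partial>R S)" by (rule nn_integral_suminf) auto
  also have "\<dots> \<le> (\<Sum>j. ennreal (2 * m * \<epsilon> j))" by (intro suminf_le L1j) (auto intro: summableI)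
  also have "\<dots> = ennreal (\<Sum>j. 2 * m * \<epsilon> j)" using e0 es pos by (intro suminf_ennreal2) (auto intro: summable_mult)
  also have "(\<Sum>j. 2 * m * \<epsilon> j) = 2 * measure lebesgue S * (\<Sum>j. \<epsilon> j)" using es mS by (simp add: suminf_mult)
  finally show "(\<integral>\<^sup>+x. ennreal \<bar>(\<Sum>j. h j x) - mavg (R S) (\<lambda>x. \<Sum>j. h j x)\<bar> \<partial>R S) \<le> ennreal (2 * measure lebesgue S * (\<Sum>j. \<epsilon> j))" .
qed

lemma pow_aux: "(2::real)^(Suc j) * (1/4)^j = 2 * (1/2)^j"
  by (induction j) (simp_all add: field_simps)

lemma half_sum: "(\<Sum>j<n. (1/2::real)^(Suc j)) = 1 - (1/2)^n"
  by (induction n) (auto simp: field_simps)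

lemma mI_le_osc:
  assumes "fpm M" and "mI M p f < \<infinity>" and "0 < p" and "mosc M p f \<le> e"
  shows "mI M p f \<le> ennreal (measure M (space M) * e powr p)"
proof -
  interpret fpm M by fact
  define E where "E = enn2real (mI M p f)"
  have E0: "0 \<le> E" by (simp add: E_def)
  have eq: "mI M p f = ennreal E" using assms(2) by (simp add: E_def)
  have "mosc M p f powr p = E / m" using assms(3) E0 pos by (simp add: mosc_def E_def powr_powr)
  moreover have "mosc M p f powr p \<le> e powr p" using assms(3,4) by (intro powr_mono2) (auto simp: mosc_def)
  ultimately have "E \<le> m * e powr p" using pos by (simp add: divide_le_eq mult.commute)
  then show ?thesis unfolding eq by (rule ennreal_leI)
qed

lemma series_BMO:
  assumes B: "\<forall>S\<in>\<S>. shape S" and p: "1 \<le> p"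
    and h: "\<And>j. in_BMO p \<S> (h j)" and eps: "\<And>j T. T \<in> \<S> \<Longrightarrow> mosc (R T) p (h j) \<le> \<epsilon> j"
    and e4: "\<And>j. \<epsilon> j \<le> (1/4)^j"
    and gi: "\<And>S. S \<in> \<S> \<Longrightarrow> integrable (R S) (\<lambda>x. \<Sum>j. h j x)"
    and AEs: "\<And>S. S \<in> \<S> \<Longrightarrow> AE x in R S. summable (\<lambda>j. \<bar>h j x\<bar>)"
    and mg: "\<And>S. S \<in> \<S> \<Longrightarrow> mavg (R S) (\<lambda>x. \<Sum>j. h j x) = (\<Sum>j. mavg (R S) (h j))"
    and sa: "\<And>S. S \<in> \<S> \<Longrightarrow> summable (\<lambda>j. \<bar>mavg (R S) (h j)\<bar>)"
  shows "in_BMO p \<S> (\<lambda>x. \<Sum>j. h j x)"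
proof -
  define g where "g = (\<lambda>x. \<Sum>j. h j x)"
  define Bd where "Bd = (2 powr p * 2) powr (1/p)"
  have *: "mI (R S) p g < \<infinity> \<and> mosc (R S) p g \<le> Bd" if S: "S \<in> \<S>" for S
  proof -
    have sh: "shape S" using B S by auto
    interpret fpm "R S" using shape_fpm[OF sh] .
    have hi: "\<And>j. integrable (R S) (h j)" and hf: "\<And>j. mI (R S) p (h j) < \<infinity>"
      using h B S by (auto simp: in_BMO_R)
    have hm[measurable]: "\<And>j. h j \<in> borel_measurable (R S)" using hi by auto
    have e0: "0 \<le> \<epsilon> j" for j using eps[OF S, of j] mosc_ge0[of "R S" p "h j"] by linarith
    define a where "a j = mavg (R S) (h j)" for j
    define w where "w j = (1/2::real)^(Suc j)" for j
    have w0: "0 < w j" for j by (simp add: w_def)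
    have ws: "(\<Sum>j<n. w j) \<le> 1" for n unfolding w_def half_sum by simp
    have suma: "summable a" using sa[OF S] unfolding a_def by (rule summable_rabs_cancel)
    have pt: "AE x in R S. ennreal (\<bar>g x - mavg (R S) g\<bar> powr p) \<le> (\<Sum>j. ennreal ((\<bar>h j x - a j\<bar> / w j) powr p))"
      using AEs[OF S]
    proof eventually_elim
      case (elim x)
      have sx: "summable (\<lambda>j. h j x)" using elim by (rule summable_rabs_cancel)
      have sd: "summable (\<lambda>j. \<bar>h j x - a j\<bar>)"
        by (rule summable_comparison_test[of _ "\<lambda>j. \<bar>h j x\<bar> + \<bar>a j\<bar>"])
           (use elim sa[OF S] in \<open>auto intro!: summable_add simp: a_def\<close>)
      have "g x - mavg (R S) g = (\<Sum>j. h j x - a j)"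
        unfolding g_def mg[OF S] a_def[symmetric] using sx suma by (rule suminf_diff)
      then show ?case using inf_weighted[OF p sd w0 ws] by simp
    qed
    have "mI (R S) p g \<le> (\<integral>\<^sup>+x. (\<Sum>j. ennreal ((\<bar>h j x - a j\<bar> / w j) powr p)) \<partial>R S)"
      unfolding mI_def by (rule nn_integral_mono_AE[OF pt])
    also have "\<dots> = (\<Sum>j. \<integral>\<^sup>+x. ennreal ((\<bar>h j x - a j\<bar> / w j) powr p) \<partial>R S)"
      by (rule nn_integral_suminf) auto
    also have "\<dots> \<le> (\<Sum>j. ennreal (m * (2 powr p * (1/2)^j)))"
    proof (intro suminf_le summableI)
      fix j
      have "(\<integral>\<^sup>+x. ennreal ((\<bar>h j x - a j\<bar> / w j) powr p) \<partial>R S) = (\<integral>\<^sup>+x. ennreal ((1 / w j) powr p) * ennreal (\<bar>h j x - a j\<bar> powr p) \<partial>R S)"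
      proof (intro nn_integral_cong)
        fix x
        have "(\<bar>h j x - a j\<bar> / w j) powr p = (1 / w j) powr p * \<bar>h j x - a j\<bar> powr p"
          using w0[of j] by (simp add: powr_divide powr_mult[symmetric] divide_inverse mult.commute)
        then show "ennreal ((\<bar>h j x - a j\<bar> / w j) powr p) = ennreal ((1 / w j) powr p) * ennreal (\<bar>h j x - a j\<bar> powr p)"
          by (simp add: ennreal_mult)
      qed
      also have "\<dots> = ennreal ((1 / w j) powr p) * mI (R S) p (h j)"
        unfolding mI_def a_def by (rule nn_integral_cmult) auto
      also have "\<dots> \<le> ennreal ((1 / w j) powr p) * ennreal (m * \<epsilon> j powr p)"
        using p by (intro mult_left_mono mI_le_osc[OF shape_fpm[OF sh] hf] eps[OF S]) auto
      also have "\<dots> = ennreal (m * ((1 / w j) * \<epsilon> j) powr p)"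
      proof -
        have pm: "((1 / w j) * \<epsilon> j) powr p = (1 / w j) powr p * \<epsilon> j powr p"
          using powr_mult[of "1 / w j" "\<epsilon> j" p] w0[of j] e0[of j] by simp
        show ?thesis unfolding pm using pos by (simp add: ennreal_mult[symmetric] mult_ac)
      qed
      also have "\<dots> \<le> ennreal (m * (2 powr p * (1/2)^j))"
      proof (intro ennreal_leI mult_left_mono)
        have iw: "1 / w j = 2 ^ Suc j" by (simp add: w_def power_one_over)
        have c1: "(1 / w j) * \<epsilon> j \<le> 2 ^ (Suc j) * (1/4)^j" unfolding iw by (rule mult_left_mono[OF e4]) simp
        have le1: "(1 / w j) * \<epsilon> j \<le> 2 * (1/2)^j" using c1 unfolding pow_aux .
        have "((1 / w j) * \<epsilon> j) powr p \<le> (2 * (1/2)^j) powr p"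
          using le1 w0[of j] e0[of j] p by (intro powr_mono2) auto
        also have "\<dots> = 2 powr p * ((1/2)^j) powr p" by (simp add: powr_mult)
        also have "((1/2::real)^j) powr p \<le> (1/2)^j" using p by (intro powr_le_one_le) (auto simp: power_le_one)
        finally show "((1 / w j) * \<epsilon> j) powr p \<le> 2 powr p * (1/2)^j" by simp
      qed (use pos in auto)
      finally show "(\<integral>\<^sup>+x. ennreal ((\<bar>h j x - a j\<bar> / w j) powr p) \<partial>R S) \<le> ennreal (m * (2 powr p * (1/2)^j))" .
    qed
    also have "\<dots> = ennreal (\<Sum>j. m * (2 powr p * (1/2)^j))"
      using pos by (intro suminf_ennreal2) (auto intro!: summable_mult summable_geometric)
    also have "(\<Sum>j. m * (2 powr p * (1/2::real)^j)) = m * (2 powr p * 2)"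
      using suminf_geometric[of "1/2::real"] by (simp add: suminf_mult summable_geometric)
    finally have le: "mI (R S) p g \<le> ennreal (m * (2 powr p * 2))" .
    have "mI (R S) p g < top" using le ennreal_less_top[of "m * (2 powr p * 2)"] by (rule le_less_trans)
    then have fin: "mI (R S) p g < \<infinity>" by simp
    have "enn2real (mI (R S) p g) \<le> enn2real (ennreal (m * (2 powr p * 2)))"
      by (rule enn2real_mono[OF le]) simp
    also have "enn2real (ennreal (m * (2 powr p * 2))) = m * (2 powr p * 2)" using pos by simp
    finally have "enn2real (mI (R S) p g) \<le> m * (2 powr p * 2)" .
    then have "enn2real (mI (R S) p g) / m \<le> 2 powr p * 2" using pos by (simp add: divide_le_eq mult.commute)
    then have "mosc (R S) p g \<le> Bd" unfolding mosc_def Bd_def using p by (intro powr_mono2) auto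
    then show ?thesis using fin by blast
  qed
  have "bdd_above ((\<lambda>S. mosc (R S) p g) ` \<S>)" unfolding bdd_above_def using * by blast
  then show ?thesis using B gi * by (auto simp: in_BMO_R g_def)
qed

lemma lip_pow:
  fixes a b T q :: real
  assumes a: "0 \<le> a" and b: "0 \<le> b" and T: "0 < T" and q: "1 \<le> q"
  shows "min a T powr q \<le> min b T powr q + q * T powr (q - 1) * \<bar>a - b\<bar>"
proof -
  define x where "x = min b T"
  define y where "y = min a T"
  have x0: "0 \<le> x" "x \<le> T" and y0: "0 \<le> y" "y \<le> T" using a b T by (auto simp: x_def y_def)
  have dxy: "\<bar>y - x\<bar> \<le> \<bar>a - b\<bar>" by (auto simp: x_def y_def min_def)
  have L0: "0 \<le> q * T powr (q - 1)" using q by simp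
  have main: "y powr q \<le> x powr q + q * T powr (q - 1) * (y - x)" if xy: "x < y"
  proof (cases "x = 0")
    case True
    have ypos: "0 < y" using xy True by simp
    have "y powr q = y powr 1 * y powr (q - 1)" using powr_add[of y 1 "q - 1"] ypos by simp
    also have "\<dots> \<le> y * T powr (q - 1)" using ypos y0 q by (auto intro!: mult_left_mono powr_mono2)
    also have "\<dots> \<le> q * T powr (q - 1) * y"
    proof -
      have "1 * T powr (q - 1) \<le> q * T powr (q - 1)" using q by (intro mult_right_mono) auto
      then show ?thesis using ypos by (simp add: mult.commute mult_left_mono)
    qed
    finally show ?thesis using True q by simp
  next
    case False
    then have xpos: "0 < x" using x0 by simp
    have der: "((\<lambda>z. z powr q) has_real_derivative q * t powr (q - 1)) (at t)" if "x \<le> t" "t \<le> y" for t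
      using that xpos by (intro has_real_derivative_powr) auto
    obtain z where z: "x < z" "z < y" and eq: "y powr q - x powr q = (y - x) * (q * z powr (q - 1))"
      using MVT2[OF xy, of "\<lambda>z. z powr q" "\<lambda>z. q * z powr (q - 1)", OF der] by blast
    have "z powr (q - 1) \<le> T powr (q - 1)" using z xpos y0 q by (intro powr_mono2) auto
    then have "(y - x) * (q * z powr (q - 1)) \<le> (y - x) * (q * T powr (q - 1))"
      using xy q by (intro mult_left_mono) auto
    then show ?thesis using eq by (simp add: algebra_simps)
  qed
  show ?thesis
  proof (cases "y \<le> x")
    case True
    then have "y powr q \<le> x powr q" using y0 q by (intro powr_mono2) auto
    moreover have "0 \<le> q * T powr (q - 1) * \<bar>a - b\<bar>" using L0 by simp
    ultimately show ?thesis by (simp add: x_def y_def)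
  next
    case False
    then have "y powr q \<le> x powr q + q * T powr (q - 1) * (y - x)" using main by simp
    also have "\<dots> \<le> x powr q + q * T powr (q - 1) * \<bar>a - b\<bar>"
      using dxy L0 by (intro add_left_mono mult_left_mono) auto
    finally show ?thesis by (simp add: x_def y_def)
  qed
qed

definition Phi :: "'b measure \<Rightarrow> real \<Rightarrow> real \<Rightarrow> ('b \<Rightarrow> real) \<Rightarrow> ennreal" where
  "Phi M q T f = (\<integral>\<^sup>+x. ennreal (min \<bar>f x - mavg M f\<bar> T powr q) \<partial>M)"

context fpm begin

lemma Phi_lip:
  assumes f: "integrable M f" and f': "integrable M f'" and T: "0 < T" and q: "1 \<le> q"
  shows "Phi M q T f \<le> Phi M q T f' + ennreal (q * T powr (q - 1)) *
           (\<integral>\<^sup>+x. ennreal \<bar>(f x - f' x) - mavg M (\<lambda>x. f x - f' x)\<bar> \<partial>M)"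
proof -
  have [measurable]: "f \<in> borel_measurable M" "f' \<in> borel_measurable M" using f f' by auto
  have L0: "0 \<le> q * T powr (q - 1)" using q by simp
  have pt: "ennreal (min \<bar>f x - mavg M f\<bar> T powr q) \<le> ennreal (min \<bar>f' x - mavg M f'\<bar> T powr q) +
      ennreal (q * T powr (q - 1)) * ennreal \<bar>(f x - f' x) - mavg M (\<lambda>x. f x - f' x)\<bar>" for x
  proof -
    have d: "\<bar>\<bar>f x - mavg M f\<bar> - \<bar>f' x - mavg M f'\<bar>\<bar> \<le> \<bar>(f x - f' x) - mavg M (\<lambda>x. f x - f' x)\<bar>"
      unfolding mavg_diff[OF f f'] by linarith
    have "min \<bar>f x - mavg M f\<bar> T powr q \<le> min \<bar>f' x - mavg M f'\<bar> T powr q + q * T powr (q - 1) * \<bar>\<bar>f x - mavg M f\<bar> - \<bar>f' x - mavg M f'\<bar>\<bar>"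
      by (rule lip_pow[OF _ _ T q]) auto
    also have "\<dots> \<le> min \<bar>f' x - mavg M f'\<bar> T powr q + q * T powr (q - 1) * \<bar>(f x - f' x) - mavg M (\<lambda>x. f x - f' x)\<bar>"
      using d L0 by (intro add_left_mono mult_left_mono) auto
    finally have "ennreal (min \<bar>f x - mavg M f\<bar> T powr q) \<le> ennreal (min \<bar>f' x - mavg M f'\<bar> T powr q + q * T powr (q - 1) * \<bar>(f x - f' x) - mavg M (\<lambda>x. f x - f' x)\<bar>)"
      by (rule ennreal_leI)
    also have "\<dots> = ennreal (min \<bar>f' x - mavg M f'\<bar> T powr q) + ennreal (q * T powr (q - 1)) * ennreal \<bar>(f x - f' x) - mavg M (\<lambda>x. f x - f' x)\<bar>"
      using L0 by (simp add: ennreal_plus ennreal_mult)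
    finally show ?thesis .
  qed
  have "Phi M q T f \<le> (\<integral>\<^sup>+x. ennreal (min \<bar>f' x - mavg M f'\<bar> T powr q) +
      ennreal (q * T powr (q - 1)) * ennreal \<bar>(f x - f' x) - mavg M (\<lambda>x. f x - f' x)\<bar> \<partial>M)"
    unfolding Phi_def by (intro nn_integral_mono pt)
  also have "\<dots> = Phi M q T f' + ennreal (q * T powr (q - 1)) *
           (\<integral>\<^sup>+x. ennreal \<bar>(f x - f' x) - mavg M (\<lambda>x. f x - f' x)\<bar> \<partial>M)"
    unfolding Phi_def by (subst nn_integral_add) (auto simp: nn_integral_cmult)
  finally show ?thesis .
qed

lemma Phi_le_mI:
  assumes q: "0 < q" and T: "0 \<le> T"
  shows "Phi M q T f \<le> mI M q f"
  unfolding Phi_def mI_def using q T by (intro nn_integral_mono ennreal_leI powr_mono2) auto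

lemma Phi_SUP:
  assumes f: "f \<in> borel_measurable M" and q: "0 < q"
  shows "(SUP k. Phi M q (real (Suc k)) f) = mI M q f"
proof -
  define u where "u x = \<bar>f x - mavg M f\<bar>" for x
  have [measurable]: "u \<in> borel_measurable M" using f unfolding u_def[abs_def] by measurable
  have inc: "incseq (\<lambda>k x. ennreal (min (u x) (real (Suc k)) powr q))"
    using q by (auto simp: incseq_def le_fun_def u_def intro!: ennreal_leI powr_mono2)
  have pt: "(SUP k. ennreal (min (u x) (real (Suc k)) powr q)) = ennreal (u x powr q)" for x
  proof (rule antisym)
    show "(SUP k. ennreal (min (u x) (real (Suc k)) powr q)) \<le> ennreal (u x powr q)"
      using q by (intro SUP_least ennreal_leI powr_mono2) (auto simp: u_def)
    have "u x \<le> real (Suc (nat \<lceil>u x\<rceil>))" by linarith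
    then have "ennreal (u x powr q) = ennreal (min (u x) (real (Suc (nat \<lceil>u x\<rceil>))) powr q)" by simp
    also have "\<dots> \<le> (SUP k. ennreal (min (u x) (real (Suc k)) powr q))" by (rule SUP_upper) simp
    finally show "ennreal (u x powr q) \<le> (SUP k. ennreal (min (u x) (real (Suc k)) powr q))" .
  qed
  have "(SUP k. Phi M q (real (Suc k)) f) = (\<integral>\<^sup>+x. (SUP k. ennreal (min (u x) (real (Suc k)) powr q)) \<partial>M)"
    unfolding Phi_def u_def[symmetric]
    by (rule nn_integral_monotone_convergence_SUP[symmetric, OF inc]) auto
  also have "\<dots> = (\<integral>\<^sup>+x. ennreal (u x powr q) \<partial>M)" by (simp only: pt)
  also have "\<dots> = mI M q f" by (simp add: mI_def u_def)
  finally show ?thesis .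
qed

end


lemma zero_BMO:
  assumes B: "\<forall>S\<in>\<S>. shape S" and p: "0 < p"
  shows "in_BMO p \<S> (\<lambda>x. 0)"
proof -
  have *: "integrable (R S) (\<lambda>x. 0::real) \<and> mI (R S) p (\<lambda>x. 0) = 0 \<and> mosc (R S) p (\<lambda>x. 0) = 0" if S: "S \<in> \<S>" for S
  proof -
    interpret fpm "R S" using shape_fpm B S by blast
    have "mavg (R S) (\<lambda>x. 0) = 0" using mavg_const[of 0] by simp
    then show ?thesis using p by (simp add: mI_def mosc_def)
  qed
  have "bdd_above ((\<lambda>S. mosc (R S) p (\<lambda>x. 0)) ` \<S>)" using * by (auto simp: bdd_above_def)
  then show ?thesis using B * by (auto simp: in_BMO_R)
qed

locale setting =
  fixes \<Omega> :: "'a::euclidean_space set" and \<S> :: "'a set set" and p0 q :: real and S0 :: "'a set"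
  assumes dom: "domain \<Omega>" and bas: "basis_of_shapes \<S> \<Omega>" and p0: "1 \<le> p0"
    and hyp: "\<forall>f. in_BMO p0 \<S> f \<longrightarrow> john_nirenberg \<Omega> \<S> f" and q: "p0 \<le> q" and S0: "S0 \<in> \<S>"
begin

lemma B: "\<forall>S\<in>\<S>. shape S" using bas by (auto simp: basis_of_shapes_def)

lemma q1: "1 \<le> q" using p0 q by simp

lemma Q_fin: assumes f: "in_BMO p0 \<S> f" and r: "0 < r" shows "in_BMO r \<S> f"
proof -
  have "\<forall>S\<in>\<S>. integrable (R S) f" using f B by (auto simp: in_BMO_R)
  then show ?thesis using JN_in_BMO[OF B _ _ r] hyp f by blast
qed

lemma bound_of: assumes "in_BMO r \<S> f" obtains b where "0 \<le> b" "\<And>S. S \<in> \<S> \<Longrightarrow> mosc (R S) r f \<le> b"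
proof -
  have "bdd_above ((\<lambda>S. mosc (R S) r f) ` \<S>)" using assms B by (auto simp: in_BMO_R)
  then obtain b where b: "\<And>S. S \<in> \<S> \<Longrightarrow> mosc (R S) r f \<le> b" by (auto simp: bdd_above_def)
  have "0 \<le> b" using b[OF S0] mosc_ge0[of "R S0" r f] by linarith
  then show ?thesis using that b by blast
qed

lemma le_norm: assumes "in_BMO r \<S> f" "S \<in> \<S>" shows "mosc (R S) r f \<le> bmo_norm r \<S> f"
proof -
  have "bdd_above ((\<lambda>S. mosc (R S) r f) ` \<S>)" using assms B by (auto simp: in_BMO_R)
  then show ?thesis unfolding norm_R[OF B] using assms(2) by (rule cSUP_upper2) simp
qed

lemma stepA:
  assumes nk: "\<forall>C>0. \<exists>f. in_BMO p0 \<S> f \<and> (\<exists>S\<in>\<S>. mosc (R S) q f > C * bmo_norm p0 \<S> f)"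
    and e: "0 < \<epsilon>"
  shows "\<exists>h. in_BMO p0 \<S> h \<and> (\<forall>T\<in>\<S>. mosc (R T) p0 h \<le> \<epsilon>) \<and> mavg (R S0) h = 0 \<and>
     (\<exists>S\<in>\<S>. mosc (R S) q h > M)"
proof -
  define C where "C = (\<bar>M\<bar> + 1) / \<epsilon>"
  have C: "0 < C" using e by (simp add: C_def add_pos_nonneg)
  obtain f S where f: "in_BMO p0 \<S> f" and S: "S \<in> \<S>" and big: "mosc (R S) q f > C * bmo_norm p0 \<S> f"
    using nk C by blast
  define n0 where "n0 = bmo_norm p0 \<S> f"
  have n0: "\<And>T. T \<in> \<S> \<Longrightarrow> mosc (R T) p0 f \<le> n0" unfolding n0_def using le_norm[OF f] by blast
  have n00: "0 \<le> n0" using n0[OF S0] mosc_ge0[of "R S0" p0 f] by linarith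
  have fq: "in_BMO q \<S> f" using Q_fin[OF f] q1 by simp
  have p0pos: "0 < p0" and qpos: "0 < q" using p0 q1 by auto
  obtain t where t: "0 < t" "t * n0 \<le> \<epsilon>" "t * mosc (R S) q f > \<bar>M\<bar>"
  proof (cases "n0 = 0")
    case True
    then have pos: "0 < mosc (R S) q f" using big by (simp add: n0_def)
    show ?thesis by (rule that[of "(\<bar>M\<bar> + 1) / mosc (R S) q f"]) (use pos True e in auto)
  next
    case False
    then have pos: "0 < n0" using n00 by simp
    have "(\<epsilon> / n0) * mosc (R S) q f > (\<epsilon> / n0) * (C * n0)"
      using big pos e by (intro mult_strict_left_mono) (auto simp: n0_def)
    also have "(\<epsilon> / n0) * (C * n0) = \<bar>M\<bar> + 1" using pos e by (simp add: C_def)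
    finally show ?thesis by (intro that[of "\<epsilon> / n0"]) (use pos e in auto)
  qed
  define h1 where "h1 = (\<lambda>x. t * f x)"
  have h1: "in_BMO p0 \<S> h1" unfolding h1_def by (rule BMO_cmult(1)[OF B f p0pos])
  have h1q: "in_BMO q \<S> h1" unfolding h1_def by (rule BMO_cmult(1)[OF B fq qpos])
  define h where "h = (\<lambda>x. h1 x + (- mavg (R S0) h1))"
  have h: "in_BMO p0 \<S> h" unfolding h_def by (rule BMO_add_const(1)[OF B h1])
  have hp: "mosc (R T) p0 h \<le> \<epsilon>" if T: "T \<in> \<S>" for T
  proof -
    have "mosc (R T) p0 h = mosc (R T) p0 h1" unfolding h_def by (rule BMO_add_const(2)[OF B h1 T])
    also have "\<dots> = \<bar>t\<bar> * mosc (R T) p0 f" unfolding h1_def by (rule BMO_cmult(2)[OF B f p0pos T])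
    finally have "mosc (R T) p0 h = t * mosc (R T) p0 f" using t by simp
    also have "\<dots> \<le> t * n0" using n0[OF T] t by (intro mult_left_mono) auto
    finally show ?thesis using t by simp
  qed
  have h0: "mavg (R S0) h = 0" unfolding h_def using BMO_add_const(3)[OF B h1 S0, of "- mavg (R S0) h1"] by simp
  have "mosc (R S) q h = mosc (R S) q h1" unfolding h_def by (rule BMO_add_const(2)[OF B h1q S])
  also have "\<dots> = \<bar>t\<bar> * mosc (R S) q f" unfolding h1_def by (rule BMO_cmult(2)[OF B fq qpos S])
  finally have "mosc (R S) q h = t * mosc (R S) q f" using t by simp
  then have "mosc (R S) q h > M" using t by simp
  then show ?thesis using h hp h0 S by blast
qed

end
context setting begin

lemma stepB:
  assumes nk: "\<forall>C>0. \<exists>f. in_BMO p0 \<S> f \<and> (\<exists>S\<in>\<S>. mosc (R S) q f > C * bmo_norm p0 \<S> f)"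
    and G: "in_BMO p0 \<S> G" and e: "0 < \<epsilon>"
  shows "\<exists>h S k. in_BMO p0 \<S> h \<and> (\<forall>T\<in>\<S>. mosc (R T) p0 h \<le> \<epsilon>) \<and> mavg (R S0) h = 0 \<and> S \<in> \<S> \<and>
     Phi (R S) q (real (Suc k)) (\<lambda>x. G x + h x) > ennreal ((real n powr q + 1) * measure lebesgue S)"
proof -
  have qpos: "0 < q" using q1 by simp
  have Gq: "in_BMO q \<S> G" using Q_fin[OF G qpos] .
  obtain BG where BG0: "0 \<le> BG" and BG: "\<And>S. S \<in> \<S> \<Longrightarrow> mosc (R S) q G \<le> BG"
    using bound_of[OF Gq] by blast
  define Rq where "Rq = (real n powr q + 2) powr (1/q)"
  obtain h S where h: "in_BMO p0 \<S> h" and hp: "\<forall>T\<in>\<S>. mosc (R T) p0 h \<le> \<epsilon>" and h0: "mavg (R S0) h = 0"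
    and S: "S \<in> \<S>" and hb: "mosc (R S) q h > 4 * (Rq + BG)"
    using stepA[OF nk e, of "4 * (Rq + BG)"] by blast
  define F where "F = (\<lambda>x. G x + h x)"
  have F: "in_BMO p0 \<S> F" unfolding F_def by (rule BMO_add(1)[OF B G h p0])
  have Fq: "in_BMO q \<S> F" using Q_fin[OF F qpos] .
  have mG: "in_BMO q \<S> (\<lambda>x. (-1) * G x)" by (rule BMO_cmult(1)[OF B Gq qpos])
  have mGo: "mosc (R S) q (\<lambda>x. (-1) * G x) = mosc (R S) q G" using BMO_cmult(2)[OF B Gq qpos S, of "-1"] by simp
  have eqh: "(\<lambda>x. F x + (-1) * G x) = h" by (auto simp: F_def)
  have "mosc (R S) q (\<lambda>x. F x + (-1) * G x) \<le> 4 * (mosc (R S) q F + mosc (R S) q (\<lambda>x. (-1) * G x))"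
    by (rule BMO_add(2)[OF B Fq mG q1 S])
  then have "mosc (R S) q h \<le> 4 * (mosc (R S) q F + mosc (R S) q G)" unfolding eqh mGo .
  then have FR: "mosc (R S) q F > Rq" using hb BG[OF S] by (simp only: distrib_left)
  have sh: "shape S" using B S by auto
  interpret fpm "R S" using shape_fpm[OF sh] .
  have Fi: "integrable (R S) F" and Ffin: "mI (R S) q F < \<infinity>" using Fq B S by (auto simp: in_BMO_R)
  define E where "E = enn2real (mI (R S) q F)"
  have Eeq: "mI (R S) q F = ennreal E" "0 \<le> E" using Ffin by (auto simp: E_def)
  have np: "0 \<le> real n powr q + 2" by simp
  have "E / m > real n powr q + 2"
  proof (rule ccontr)
    assume "\<not> E / m > real n powr q + 2"
    then have "(E / m) powr (1/q) \<le> Rq" unfolding Rq_def using qpos Eeq pos by (intro powr_mono2) auto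
    then show False using FR by (simp add: mosc_def E_def)
  qed
  then have "E > (real n powr q + 1) * m" using pos by (simp add: field_simps)
  then have c: "ennreal ((real n powr q + 1) * measure lebesgue S) < mI (R S) q F"
    unfolding Eeq shape_measure[OF sh, symmetric] using pos by (subst ennreal_less_iff) auto
  have "mI (R S) q F = (SUP k. Phi (R S) q (real (Suc k)) F)"
    using Phi_SUP[of F q] Fi qpos by auto
  with c obtain k where k: "ennreal ((real n powr q + 1) * measure lebesgue S) < Phi (R S) q (real (Suc k)) F"
    by (auto simp: less_SUP_iff)
  show ?thesis using h hp h0 S k unfolding F_def by blast
qed

end

context setting begin

lemma key: "\<exists>C>0. \<forall>f. in_BMO p0 \<S> f \<longrightarrow> (\<forall>S\<in>\<S>. mosc (R S) q f \<le> C * bmo_norm p0 \<S> f)"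
proof (rule ccontr)
  assume "\<not> ?thesis"
  then have nk: "\<forall>C>0. \<exists>f. in_BMO p0 \<S> f \<and> (\<exists>S\<in>\<S>. mosc (R S) q f > C * bmo_norm p0 \<S> f)"
    by (auto simp: not_le)
  have qpos: "0 < q" and p0pos: "0 < p0" using q1 p0 by auto
  define P where "P n G \<epsilon> h S k \<longleftrightarrow> in_BMO p0 \<S> h \<and> (\<forall>T\<in>\<S>. mosc (R T) p0 h \<le> \<epsilon>) \<and> mavg (R S0) h = 0 \<and> S \<in> \<S> \<and>
     Phi (R S) q (real (Suc k)) (\<lambda>x. G x + h x) > ennreal ((real n powr q + 1) * measure lebesgue S)"
    for n :: nat and G :: "'a \<Rightarrow> real" and \<epsilon> :: real and h S and k :: nat
  define CH where "CH n G \<epsilon> = (SOME y. P n G \<epsilon> (fst y) (fst (snd y)) (snd (snd y)))" for n G \<epsilon>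
  have CH: "P n G \<epsilon> (fst (CH n G \<epsilon>)) (fst (snd (CH n G \<epsilon>))) (snd (snd (CH n G \<epsilon>)))"
    if GG: "in_BMO p0 \<S> G" and ee: "0 < \<epsilon>" for n G \<epsilon>
  proof -
    obtain h S k where "P n G \<epsilon> h S k" using stepB[OF nk GG ee, of n] unfolding P_def by blast
    then have "\<exists>y. P n G \<epsilon> (fst y) (fst (snd y)) (snd (snd y))" by (intro exI[of _ "(h, S, k)"]) simp
    then show ?thesis unfolding CH_def by (rule someI_ex)
  qed
  define Lf where "Lf k = q * real (Suc k) powr (q - 1)" for k :: nat
  have Lpos: "0 < Lf k" for k using qpos by (simp add: Lf_def)
  define st where "st = rec_nat ((\<lambda>x. 0::real), 1::real)
      (\<lambda>n s. (\<lambda>x. fst s x + fst (CH n (fst s) (snd s)) x, min (snd s / 4) (1 / (8 * Lf (snd (snd (CH n (fst s) (snd s))))))))"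
  define Gs where "Gs n = fst (st n)" for n
  define es where "es n = snd (st n)" for n
  define hs where "hs n = fst (CH n (Gs n) (es n))" for n
  define Ss where "Ss n = fst (snd (CH n (Gs n) (es n)))" for n
  define ks where "ks n = snd (snd (CH n (Gs n) (es n)))" for n
  have st0: "Gs 0 = (\<lambda>x. 0)" "es 0 = 1" by (simp_all add: Gs_def es_def st_def)
  have stS: "Gs (Suc n) = (\<lambda>x. Gs n x + hs n x)" "es (Suc n) = min (es n / 4) (1 / (8 * Lf (ks n)))" for n
    by (simp_all add: Gs_def es_def st_def hs_def ks_def)
  have inv: "in_BMO p0 \<S> (Gs n) \<and> 0 < es n" for n
  proof (induction n)
    case 0 then show ?case using zero_BMO[OF B p0pos] st0 by simp
  next
    case (Suc n)
    then have "P n (Gs n) (es n) (hs n) (Ss n) (ks n)" unfolding hs_def Ss_def ks_def by (intro CH) auto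
    then have "in_BMO p0 \<S> (hs n)" by (simp add: P_def)
    then have "in_BMO p0 \<S> (\<lambda>x. Gs n x + hs n x)" using Suc BMO_add(1)[OF B _ _ p0] by blast
    moreover have "0 < es (Suc n)" using Suc Lpos[of "ks n"] by (simp add: stS)
    ultimately show ?case by (simp add: stS)
  qed
  have Pn: "P n (Gs n) (es n) (hs n) (Ss n) (ks n)" for n
    unfolding hs_def Ss_def ks_def using inv[of n] by (intro CH) auto
  have hsB: "in_BMO p0 \<S> (hs j)" and hse: "\<And>T. T \<in> \<S> \<Longrightarrow> mosc (R T) p0 (hs j) \<le> es j"
    and hs0: "mavg (R S0) (hs j) = 0" and SsS: "Ss j \<in> \<S>"
    and Phin: "Phi (R (Ss j)) q (real (Suc (ks j))) (\<lambda>x. Gs j x + hs j x) > ennreal ((real j powr q + 1) * measure lebesgue (Ss j))"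
    for j using Pn[of j] by (auto simp: P_def)
  have Gsum: "Gs n = (\<lambda>x. \<Sum>j<n. hs j x)" for n
    by (induction n) (simp_all add: st0 stS)
  have es0: "0 \<le> es n" for n using inv[of n] by simp
  have e4: "es n \<le> (1/4)^n" for n
  proof (induction n)
    case 0 then show ?case by (simp add: st0)
  next
    case (Suc n)
    have "es (Suc n) \<le> es n / 4" by (simp add: stS)
    also have "\<dots> \<le> (1/4)^n / 4" using Suc by simp
    finally show ?case by simp
  qed
  have esum: "summable es"
    by (rule summable_comparison_test[of _ "\<lambda>n. (1/4::real)^n"]) (use e4 es0 in \<open>auto intro: summable_geometric\<close>)
  have chainK: "\<forall>S\<in>\<S>. \<exists>K\<ge>0. \<forall>h \<epsilon>. in_BMO p0 \<S> h \<and> (\<forall>T\<in>\<S>. mosc (R T) p0 h \<le> \<epsilon>) \<longrightarrow>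
            \<bar>mavg (R S) h - mavg (R S0) h\<bar> \<le> K * \<epsilon>"
    by (rule chain[OF dom bas p0 S0])
  have Kof: "\<exists>K\<ge>0. \<forall>j. \<bar>mavg (R S) (hs j)\<bar> \<le> K * es j" if S: "S \<in> \<S>" for S
  proof -
    obtain K where K: "K \<ge> 0" and HK: "\<And>h \<epsilon>. in_BMO p0 \<S> h \<and> (\<forall>T\<in>\<S>. mosc (R T) p0 h \<le> \<epsilon>) \<Longrightarrow>
            \<bar>mavg (R S) h - mavg (R S0) h\<bar> \<le> K * \<epsilon>" using chainK S by blast
    have "\<bar>mavg (R S) (hs j)\<bar> \<le> K * es j" for j using HK[of "hs j" "es j"] hsB hse hs0 by simp
    then show ?thesis using K by blast
  qed
  define g where "g = (\<lambda>x. \<Sum>j. hs j x)"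
  have ser: "integrable (R S) g \<and> (AE x in R S. summable (\<lambda>j. \<bar>hs j x\<bar>)) \<and>
      mavg (R S) g = (\<Sum>j. mavg (R S) (hs j)) \<and> summable (\<lambda>j. \<bar>mavg (R S) (hs j)\<bar>)" if S: "S \<in> \<S>" for S
  proof -
    obtain K where K: "K \<ge> 0" and Kb: "\<And>j. \<bar>mavg (R S) (hs j)\<bar> \<le> K * es j" using Kof[OF S] by blast
    note so = series_on[OF B p0 S hsB hse esum K Kb]
    have "summable (\<lambda>j. \<bar>mavg (R S) (hs j)\<bar>)"
      by (rule summable_comparison_test[of _ "\<lambda>j. K * es j"]) (use Kb esum in \<open>auto intro: summable_mult\<close>)
    then show ?thesis using so unfolding g_def by blast
  qed
  have gB: "in_BMO p0 \<S> g" unfolding g_def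
    by (rule series_BMO[OF B p0 hsB hse e4]) (use ser in \<open>auto simp: g_def\<close>)
  have gq: "in_BMO q \<S> g" using Q_fin[OF gB qpos] .
  obtain Bg where Bg0: "0 \<le> Bg" and Bg: "\<And>S. S \<in> \<S> \<Longrightarrow> mosc (R S) q g \<le> Bg" using bound_of[OF gq] by blast
  have nB: "real n \<le> Bg" for n
  proof -
    define S where "S = Ss n"
    define k where "k = ks n"
    define L where "L = Lf k"
    have S: "S \<in> \<S>" by (simp add: S_def SsS)
    have sh: "shape S" using B S by auto
    interpret fpm "R S" using shape_fpm[OF sh] .
    have mS: "m = measure lebesgue S" using shape_measure[OF sh] .
    obtain K where K: "K \<ge> 0" and Kb: "\<And>j. \<bar>mavg (R S) (hs j)\<bar> \<le> K * es j" using Kof[OF S] by blast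
    define w where "w = (\<lambda>x. \<Sum>j. hs (j + Suc n) x)"
    have esum': "summable (\<lambda>j. es (j + Suc n))" using esum by (rule summable_ignore_initial_segment)
    note so = series_on[OF B p0 S, of "\<lambda>j. hs (j + Suc n)" "\<lambda>j. es (j + Suc n)" K, OF hsB hse esum' K Kb]
    have wi: "integrable (R S) w" using so(1) by (simp add: w_def)
    have wL1: "(\<integral>\<^sup>+x. ennreal \<bar>w x - mavg (R S) w\<bar> \<partial>R S) \<le> ennreal (2 * m * (\<Sum>j. es (j + Suc n)))"
      using so(4) mS by (simp add: w_def)
    have egeo: "es (j + Suc n) \<le> (1/4)^j * es (Suc n)" for j
    proof (induction j)
      case 0 then show ?case by simp
    next
      case (Suc j)
      have "es (Suc j + Suc n) \<le> es (j + Suc n) / 4" using stS(2)[of "j + Suc n"] by simp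
      also have "\<dots> \<le> (1/4)^j * es (Suc n) / 4" using Suc by simp
      finally show ?case by simp
    qed
    have "(\<Sum>j. es (j + Suc n)) \<le> (\<Sum>j. (1/4)^j * es (Suc n))"
      by (rule suminf_le[OF egeo esum']) (auto intro: summable_mult2 summable_geometric)
    also have "\<dots> = (4/3) * es (Suc n)"
      using suminf_geometric[of "1/4::real"] by (simp add: suminf_mult2[symmetric] summable_geometric)
    also have "\<dots> \<le> (4/3) * (1 / (8 * L))" using stS(2)[of n] by (simp add: L_def k_def)
    finally have tail: "(\<Sum>j. es (j + Suc n)) \<le> (4/3) * (1 / (8 * L))" .
    have LL: "L * (2 * m * (\<Sum>j. es (j + Suc n))) \<le> m"
    proof -
      have "L * (2 * m * (\<Sum>j. es (j + Suc n))) \<le> L * (2 * m * ((4/3) * (1 / (8 * L))))"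
        using tail pos Lpos[of k] by (intro mult_left_mono) (auto simp: L_def)
      also have "\<dots> = m / 3" using Lpos[of k] by (simp add: L_def field_simps)
      finally show ?thesis using pos by simp
    qed
    define G1 where "G1 = (\<lambda>x. Gs n x + hs n x)"
    have G1i: "integrable (R S) G1"
      using inv[of "Suc n"] B S by (auto simp: in_BMO_R stS G1_def)
    have gi: "integrable (R S) g" using ser[OF S] by blast
    have AEeq: "AE x in R S. G1 x - g x = - w x"
      using ser[OF S]
    proof (elim conjE)
      assume "AE x in R S. summable (\<lambda>j. \<bar>hs j x\<bar>)"
      then show ?thesis
      proof eventually_elim
        case (elim x)
        have sx: "summable (\<lambda>j. hs j x)" using elim by (rule summable_rabs_cancel)
        have "g x = (\<Sum>j. hs (j + Suc n) x) + (\<Sum>j<Suc n. hs j x)"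
          unfolding g_def by (rule suminf_split_initial_segment[OF sx])
        moreover have "G1 x = (\<Sum>j<Suc n. hs j x)" by (simp add: G1_def Gsum)
        ultimately show ?case by (simp add: w_def)
      qed
    qed
    have Dm: "(\<lambda>x. G1 x - g x) \<in> borel_measurable (R S)" using G1i gi by auto
    have intEq: "integral\<^sup>L (R S) (\<lambda>x. G1 x - g x) = integral\<^sup>L (R S) (\<lambda>x. - w x)"
      by (rule integral_cong_AE) (use Dm wi AEeq in auto)
    have mavgEq: "mavg (R S) (\<lambda>x. G1 x - g x) = - mavg (R S) w"
      unfolding mavg_def intEq by simp
    have nnEq: "(\<integral>\<^sup>+x. ennreal \<bar>(G1 x - g x) - mavg (R S) (\<lambda>x. G1 x - g x)\<bar> \<partial>R S) =
        (\<integral>\<^sup>+x. ennreal \<bar>w x - mavg (R S) w\<bar> \<partial>R S)"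
      by (rule nn_integral_cong_AE) (use AEeq in \<open>eventually_elim, simp add: mavgEq\<close>)
    have T: "0 < real (Suc k)" by simp
    have "Phi (R S) q (real (Suc k)) G1 \<le> Phi (R S) q (real (Suc k)) g + ennreal (q * real (Suc k) powr (q - 1)) *
           (\<integral>\<^sup>+x. ennreal \<bar>(G1 x - g x) - mavg (R S) (\<lambda>x. G1 x - g x)\<bar> \<partial>R S)"
      by (rule Phi_lip[OF G1i gi T q1])
    also have "\<dots> \<le> Phi (R S) q (real (Suc k)) g + ennreal L * ennreal (2 * m * (\<Sum>j. es (j + Suc n)))"
      unfolding nnEq L_def Lf_def by (intro add_left_mono mult_left_mono wL1) auto
    also have "ennreal L * ennreal (2 * m * (\<Sum>j. es (j + Suc n))) = ennreal (L * (2 * m * (\<Sum>j. es (j + Suc n))))"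
    proof -
      have "0 \<le> (\<Sum>j. es (j + Suc n))" using esum' es0 by (intro suminf_nonneg) auto
      then have "0 \<le> 2 * m * (\<Sum>j. es (j + Suc n))" using pos by simp
      then show ?thesis using Lpos[of k] unfolding L_def by (intro ennreal_mult[symmetric]) auto
    qed
    also have "\<dots> \<le> ennreal m" using LL by (rule ennreal_leI)
    also have "Phi (R S) q (real (Suc k)) g \<le> mI (R S) q g" by (rule Phi_le_mI) (use qpos in auto)
    finally have up: "Phi (R S) q (real (Suc k)) G1 \<le> mI (R S) q g + ennreal m" by simp
    have low: "ennreal ((real n powr q + 1) * m) < Phi (R S) q (real (Suc k)) G1"
      using Phin[of n] mS by (simp add: S_def k_def G1_def)
    have gfin: "mI (R S) q g < \<infinity>" using gq B S by (auto simp: in_BMO_R)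
    define E where "E = enn2real (mI (R S) q g)"
    have Eeq: "mI (R S) q g = ennreal E" "0 \<le> E" using gfin by (auto simp: E_def)
    have "ennreal ((real n powr q + 1) * m) < ennreal (E + m)"
      using low up Eeq pos by (simp add: ennreal_plus)
    then have "(real n powr q + 1) * m < E + m" using Eeq pos by (subst (asm) ennreal_less_iff) auto
    then have lt: "real n powr q < E / m" using pos by (simp add: field_simps)
    have "mosc (R S) q g powr q = E / m" using qpos Eeq pos by (simp add: mosc_def E_def powr_powr)
    then have "real n powr q < mosc (R S) q g powr q" using lt by simp
    then have "real n < mosc (R S) q g"
      using qpos by (metis mosc_ge0 not_le of_nat_0_le_iff powr_mono2 less_imp_le)
    then show ?thesis using Bg[OF S] by simp
  qed
  show False using nB[of "nat \<lceil>Bg\<rceil> + 1"] by linarith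
qed

end

lemma norm_le_of:
  assumes B: "\<forall>S\<in>\<S>. shape S" and ne: "\<S> \<noteq> {}" and le: "\<And>S. S \<in> \<S> \<Longrightarrow> mosc (R S) p f \<le> c"
  shows "bmo_norm p \<S> f \<le> c"
  unfolding norm_R[OF B] using ne le by (rule cSUP_least)

theorem corollary7p7:
  fixes \<Omega> :: "'a::euclidean_space set" and \<S> :: "'a set set" and p0 :: real
  assumes "domain \<Omega>"
    and "basis_of_shapes \<S> \<Omega>"
    and "1 \<le> p0"
    and "\<forall>f. in_BMO p0 \<S> f \<longrightarrow> john_nirenberg \<Omega> \<S> f"
  shows "\<forall>p1 p2. p0 \<le> p1 \<longrightarrow> p0 \<le> p2 \<longrightarrow>
           (\<forall>f. in_BMO p1 \<S> f \<longleftrightarrow> in_BMO p2 \<S> f) \<and>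
           (\<exists>C>0. \<forall>f. in_BMO p1 \<S> f \<longrightarrow>
               bmo_norm p1 \<S> f \<le> C * bmo_norm p2 \<S> f \<and>
               bmo_norm p2 \<S> f \<le> C * bmo_norm p1 \<S> f)"
proof (intro allI impI)
  fix p1 p2 :: real
  assume p1: "p0 \<le> p1" and p2: "p0 \<le> p2"
  note dom = assms(1) and bas = assms(2) and p0 = assms(3) and hyp = assms(4)
  have B: "\<forall>S\<in>\<S>. shape S" using bas by (auto simp: basis_of_shapes_def)
  show "(\<forall>f. in_BMO p1 \<S> f \<longleftrightarrow> in_BMO p2 \<S> f) \<and>
           (\<exists>C>0. \<forall>f. in_BMO p1 \<S> f \<longrightarrow>
               bmo_norm p1 \<S> f \<le> C * bmo_norm p2 \<S> f \<and>
               bmo_norm p2 \<S> f \<le> C * bmo_norm p1 \<S> f)"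
  proof (cases "\<S> = {}")
    case True
    have i: "in_BMO p \<S> f" for p f using True by (simp add: in_BMO_def)
    have e: "bmo_norm p1 \<S> f = bmo_norm p2 \<S> f" for f using True by (simp add: bmo_norm_def)
    show ?thesis
    proof (intro conjI allI exI[of _ "1::real"] impI)
      fix f show "in_BMO p1 \<S> f \<longleftrightarrow> in_BMO p2 \<S> f" using i by blast
      show "bmo_norm p1 \<S> f \<le> 1 * bmo_norm p2 \<S> f" using e[of f] by simp
      show "bmo_norm p2 \<S> f \<le> 1 * bmo_norm p1 \<S> f" using e[of f] by simp
    qed simp
  next
    case False
    then obtain S0 where S0: "S0 \<in> \<S>" by blast
    interpret s1: setting \<Omega> \<S> p0 p1 S0 by (rule setting.intro[OF dom bas p0 hyp p1 S0])
    interpret s2: setting \<Omega> \<S> p0 p2 S0 by (rule setting.intro[OF dom bas p0 hyp p2 S0])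
    have to0: "in_BMO p0 \<S> f" if "in_BMO r \<S> f" "p0 \<le> r" for f r
      using BMO_mono(1)[OF B that(1) p0 that(2)] .
    have p1pos: "0 < p1" and p2pos: "0 < p2" using p0 p1 p2 by auto
    have iff: "in_BMO p1 \<S> f \<longleftrightarrow> in_BMO p2 \<S> f" for f
    proof
      assume "in_BMO p1 \<S> f"
      then have "in_BMO p0 \<S> f" using p1 by (rule to0)
      then show "in_BMO p2 \<S> f" using p2pos by (rule s1.Q_fin)
    next
      assume "in_BMO p2 \<S> f"
      then have "in_BMO p0 \<S> f" using p2 by (rule to0)
      then show "in_BMO p1 \<S> f" using p1pos by (rule s1.Q_fin)
    qed
    obtain C1 where C1: "C1 > 0" and HC1': "\<forall>f. in_BMO p0 \<S> f \<longrightarrow> (\<forall>S\<in>\<S>. mosc (R S) p1 f \<le> C1 * bmo_norm p0 \<S> f)"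
      using s1.key by (elim exE conjE)
    obtain C2 where C2: "C2 > 0" and HC2': "\<forall>f. in_BMO p0 \<S> f \<longrightarrow> (\<forall>S\<in>\<S>. mosc (R S) p2 f \<le> C2 * bmo_norm p0 \<S> f)"
      using s2.key by (elim exE conjE)
    have HC1: "\<And>f S. in_BMO p0 \<S> f \<Longrightarrow> S \<in> \<S> \<Longrightarrow> mosc (R S) p1 f \<le> C1 * bmo_norm p0 \<S> f"
      using HC1' by blast
    have HC2: "\<And>f S. in_BMO p0 \<S> f \<Longrightarrow> S \<in> \<S> \<Longrightarrow> mosc (R S) p2 f \<le> C2 * bmo_norm p0 \<S> f"
      using HC2' by blast
    define C where "C = 2 * max C1 C2"
    have Cpos: "C > 0" using C1 by (simp add: C_def)
    have main: "bmo_norm r \<S> f \<le> C * bmo_norm r' \<S> f"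
      if f: "in_BMO r \<S> f" "in_BMO r' \<S> f" and r: "p0 \<le> r" and r': "p0 \<le> r'"
        and HC: "\<And>S. S \<in> \<S> \<Longrightarrow> mosc (R S) r f \<le> Cr * bmo_norm p0 \<S> f" and Cr: "0 < Cr" "Cr \<le> max C1 C2"
      for f r r' Cr
    proof -
      have f0: "in_BMO p0 \<S> f" using to0[OF f(1) r] .
      have n0: "bmo_norm p0 \<S> f \<le> 2 * bmo_norm r' \<S> f"
      proof (rule norm_le_of[OF B False])
        fix S assume S: "S \<in> \<S>"
        have "mosc (R S) p0 f \<le> 2 * mosc (R S) r' f" using BMO_mono(2)[OF B f(2) p0 r' S] .
        also have "\<dots> \<le> 2 * bmo_norm r' \<S> f" using s1.le_norm[OF f(2) S] by simp
        finally show "mosc (R S) p0 f \<le> 2 * bmo_norm r' \<S> f" .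
      qed
      have N0: "0 \<le> bmo_norm r' \<S> f" using s1.le_norm[OF f(2) S0] mosc_ge0[of "R S0" r' f] by linarith
      have "bmo_norm r \<S> f \<le> Cr * bmo_norm p0 \<S> f" using HC by (rule norm_le_of[OF B False])
      also have "\<dots> \<le> Cr * (2 * bmo_norm r' \<S> f)" using n0 Cr by (intro mult_left_mono) auto
      also have "\<dots> \<le> C * bmo_norm r' \<S> f" using Cr N0 by (simp add: C_def mult_right_mono)
      finally show ?thesis .
    qed
    show ?thesis
    proof (intro conjI allI exI[of _ C] impI Cpos iff)
      fix f assume f1: "in_BMO p1 \<S> f"
      have f2: "in_BMO p2 \<S> f" using iff f1 by blast
      have f0: "in_BMO p0 \<S> f" using to0[OF f1 p1] .
      show "bmo_norm p1 \<S> f \<le> C * bmo_norm p2 \<S> f"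
        by (rule main[OF f1 f2 p1 p2 HC1[OF f0]]) (use C1 in auto)
      show "bmo_norm p2 \<S> f \<le> C * bmo_norm p1 \<S> f"
        by (rule main[OF f2 f1 p2 p1 HC2[OF f0]]) (use C2 in auto)
    qed
  qed
qed

end
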